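(* In the setting described in the context, suppose Method 2 does not stop and let $(x^k)_{k\in\mathbb N}$ be the generated sequence. Then every weak accumulation point of $(x^k)_{k\in\mathbb N}$ belongs to $\operatorname{zer}(A+B)$.
   Context: Let $\mathcal H$ be a real Hilbert space with inner product $\langle\cdot,\cdot\rangle$ and norm $\|\cdot\|$. Let $A_1:\mathcal H\to\mathcal H$ be $\beta$-cocoercive for some $\beta>0$ (i.e. $\langle A_1x-A_1y,x-y\rangle\ge\beta\|A_1x-A_1y\|^2$ for all $x,y$), let $A_2:\mathcal H\to\mathcal H$ be maximally monotone and uniformly continuous, let $B:\mathcal H\rightrightarrows\mathcal H$ be maximally monotone, and set $A:=A_1+A_2$. Assume $\operatorname{zer}(A+B):=\{x:0\in Ax+Bx\}\neq\emptyset$. $J_{\alpha B}:=(I+\alpha B)^{-1}$ for $\alpha>0$, and $P_C$ denotes the orthogonal projection onto a nonempty closed convex set $C$. Fix $\theta,\delta\in(0,1)$, $\bar\delta>0$ with $1-\delta-\bar\delta>0$, and $\alpha_{-1}>0$ with $\alpha_{-1}\le4\beta\bar\delta$. Conceptual Algorithm: pick $x^0\in\mathcal H$. Given $x^k$ and $\alpha_{k-1}$, for $j\in\mathbb N$ let $\bar x^k_j:=J_{\alpha_{k-1}\theta^jB}(x^k-\alpha_{k-1}\theta^jAx^k)$ and let $j(k)$ be the smallest $j\in\mathbb N$ with $\alpha_{k-1}\theta^j\langle A_2x^k-A_2\bar x^k_j,x^k-\bar x^k_j\rangle\le\delta\|x^k-\bar x^k_j\|^2$. Set $\alpha_k:=\alpha_{k-1}\theta^{j(k)}$,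 $\bar x^k:=J_{\alpha_kB}(x^k-\alpha_kAx^k)$, $r_k:=\frac{\bar\delta}{\alpha_k}\|x^k-\bar x^k\|^2$, $T_k:=\{x\in\mathcal H:\langle \frac{x^k-\bar x^k}{\alpha_k}-(A_2x^k-A_2\bar x^k),x-\bar x^k\rangle\le r_k\}$ and $\Gamma_k:=\{x\in\mathcal H:\langle x^0-x^k,x-x^k\rangle\le0\}$. Method 2 sets $x^{k+1}:=P_{T_k\cap\Gamma_k}(x^0)$ and stops if $x^{k+1}=x^k$. *)

theory Defs
  imports "HOL-Analysis.Analysis"
begin

definition monotone_op :: "('a::real_inner \<Rightarrow> 'a set) \<Rightarrow> bool" where
  "monotone_op B \<longleftrightarrow> (\<forall>x y u v. u \<in> B x \<longrightarrow> v \<in> B y \<longrightarrow> inner (u - v) (x - y) \<ge> 0)"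

definition maximal_monotone :: "('a::real_inner \<Rightarrow> 'a set) \<Rightarrow> bool" where
  "maximal_monotone B \<longleftrightarrow> monotone_op B \<and>
     (\<forall>x u. (\<forall>y v. v \<in> B y \<longrightarrow> inner (u - v) (x - y) \<ge> 0) \<longrightarrow> u \<in> B x)"

definition cocoercive :: "real \<Rightarrow> ('a::real_inner \<Rightarrow> 'a) \<Rightarrow> bool" where
  "cocoercive \<beta> F \<longleftrightarrow> (\<forall>x y. inner (F x - F y) (x - y) \<ge> \<beta> * (norm (F x - F y))\<^sup>2)"

text \<open>Resolvent \<open>J_{\<alpha>B} = (I + \<alpha>B)\<^sup>-\<^sup>1\<close> (single-valued for maximally monotone B, \<alpha> > 0).\<close>
definition resolvent :: "real \<Rightarrow> ('a::real_inner \<Rightarrow> 'a set) \<Rightarrow> 'a \<Rightarrow> 'a" where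
  "resolvent \<alpha> B z = (THE x. \<exists>u \<in> B x. z = x + \<alpha> *\<^sub>R u)"

definition zer_sum :: "('a::real_inner \<Rightarrow> 'a) \<Rightarrow> ('a \<Rightarrow> 'a set) \<Rightarrow> 'a set" where
  "zer_sum A B = {x. \<exists>u \<in> B x. A x + u = 0}"

definition weak_conv :: "(nat \<Rightarrow> 'a::real_inner) \<Rightarrow> 'a \<Rightarrow> bool" where
  "weak_conv s p \<longleftrightarrow> (\<forall>y. ((\<lambda>k. inner (s k) y) \<longlongrightarrow> inner p y) sequentially)"

definition weak_accum_point :: "(nat \<Rightarrow> 'a::real_inner) \<Rightarrow> 'a \<Rightarrow> bool" where
  "weak_accum_point s p \<longleftrightarrow> (\<exists>r. strict_mono r \<and> weak_conv (s \<circ> r) p)"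

definition fb_point :: "('a::real_inner \<Rightarrow> 'a) \<Rightarrow> ('a \<Rightarrow> 'a set) \<Rightarrow> real \<Rightarrow> 'a \<Rightarrow> 'a" where
  "fb_point A B \<alpha> x = resolvent \<alpha> B (x - \<alpha> *\<^sub>R A x)"

text \<open>Linesearch index \<open>j(k)\<close>: smallest j satisfying the Armijo-type condition,
  given current point x and previous step size \<alpha> (= \<alpha>_{k-1}).\<close>
definition ls_index :: "('a::real_inner \<Rightarrow> 'a) \<Rightarrow> ('a \<Rightarrow> 'a) \<Rightarrow> ('a \<Rightarrow> 'a set) \<Rightarrow> real \<Rightarrow> real \<Rightarrow> real \<Rightarrow> 'a \<Rightarrow> nat" where
  "ls_index A A2 B \<theta> \<delta> \<alpha> x = (LEAST j::nat.
     \<alpha> * \<theta> ^ j * inner (A2 x - A2 (fb_point A B (\<alpha> * \<theta> ^ j) x)) (x - fb_point A B (\<alpha> * \<theta> ^ j) x)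
       \<le> \<delta> * (norm (x - fb_point A B (\<alpha> * \<theta> ^ j) x))\<^sup>2)"

text \<open>Half-space \<open>T_k\<close>, for step size \<alpha> = \<alpha>_k, current point x = x^k and xb = \<open>x\<bar>^k\<close>.\<close>
definition T_set :: "('a::real_inner \<Rightarrow> 'a) \<Rightarrow> real \<Rightarrow> real \<Rightarrow> 'a \<Rightarrow> 'a \<Rightarrow> 'a set" where
  "T_set A2 \<delta>b \<alpha> x xb = {z. inner ((1 / \<alpha>) *\<^sub>R (x - xb) - (A2 x - A2 xb)) (z - xb)
       \<le> (\<delta>b / \<alpha>) * (norm (x - xb))\<^sup>2}"

definition Gamma_set :: "'a::real_inner \<Rightarrow> 'a \<Rightarrow> 'a set" where
  "Gamma_set x0 x = {z. inner (x0 - x) (z - x) \<le> 0}"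

text \<open>Orthogonal (metric) projection onto a set C (for nonempty closed convex C in a Hilbert
  space this is the unique nearest point).\<close>
definition proj :: "'a::real_inner set \<Rightarrow> 'a \<Rightarrow> 'a" where
  "proj C z = (SOME p. p \<in> C \<and> (\<forall>y \<in> C. dist z p \<le> dist z y))"

end

theory Submission
  imports Defs
begin

lemma attain_min:
  fixes C :: "'a::{real_inner,complete_space} set" and F :: "'a \<Rightarrow> real"
  assumes C: "closed C" "C \<noteq> {}" and Fc: "continuous_on C F" and lb: "\<forall>x\<in>C. b \<le> F x"
    and kp: "\<kappa> > 0"
    and mid: "\<And>a c. a\<in>C \<Longrightarrow> c\<in>C \<Longrightarrow> (1/2) *\<^sub>R (a + c) \<in> C \<and>
        F ((1/2) *\<^sub>R (a + c)) \<le> (F a + F c)/2 - \<kappa> * (norm (a - c))\<^sup>2"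
  shows "\<exists>x\<in>C. \<forall>y\<in>C. F x \<le> F y"
proof -
  define m where "m = Inf (F ` C)"
  have bdd: "bdd_below (F ` C)" using lb by (auto intro: bdd_belowI)
  have mle: "m \<le> F y" if "y \<in> C" for y unfolding m_def using bdd that by (simp add: cInf_lower)
  have "\<forall>n::nat. \<exists>u\<in>C. F u < m + 1/(real n + 1)"
  proof
    fix n :: nat
    have "Inf (F ` C) < m + 1/(real n + 1)" unfolding m_def by (simp add: add_pos_pos)
    then show "\<exists>u\<in>C. F u < m + 1/(real n + 1)" using cInf_lessD[of "F ` C"] C(2) by auto
  qed
  then obtain u where u: "\<And>n. u n \<in> C" "\<And>n. F (u n) < m + 1/(real n + 1)" by metis
  have key: "\<kappa> * (norm (u i - u j))\<^sup>2 \<le> 1/(real N + 1)" if "i \<ge> N" "j \<ge> N" for i j N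
  proof -
    have "m \<le> F ((1/2) *\<^sub>R (u i + u j))" using mid[OF u(1) u(1)] mle by blast
    also have "\<dots> \<le> (F (u i) + F (u j))/2 - \<kappa> * (norm (u i - u j))\<^sup>2" using mid[OF u(1) u(1)] by blast
    finally have "\<kappa> * (norm (u i - u j))\<^sup>2 \<le> (F (u i) + F (u j))/2 - m" by simp
    moreover have "1/(real i + 1) \<le> 1/(real N + 1)" "1/(real j + 1) \<le> 1/(real N + 1)"
      using that by (auto simp: frac_le)
    ultimately have "F (u i) - m < 1/(real N + 1)" "F (u j) - m < 1/(real N + 1)"
      using u(2)[of i] u(2)[of j] by linarith+
    with \<open>\<kappa> * (norm (u i - u j))\<^sup>2 \<le> (F (u i) + F (u j))/2 - m\<close> show ?thesis
      unfolding add_divide_distrib by linarith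
  qed
  have "Cauchy u"
  proof (rule CauchyI)
    fix e :: real assume e: "e > 0"
    have pos: "\<kappa> * e\<^sup>2 > 0" using kp e by simp
    obtain N :: nat where N: "1/(\<kappa> * e\<^sup>2) < real N"
      using reals_Archimedean2 by blast
    have N2: "1/(real N + 1) < \<kappa> * e\<^sup>2"
    proof -
      have "1 < real N * (\<kappa> * e\<^sup>2)" using N pos by (simp add: divide_less_eq)
      then have "1 < (real N + 1) * (\<kappa> * e\<^sup>2)" using pos by (simp add: distrib_right)
      then show ?thesis by (simp add: divide_less_eq mult.commute)
    qed
    show "\<exists>M. \<forall>i\<ge>M. \<forall>j\<ge>M. norm (u i - u j) < e"
    proof (intro exI allI impI)
      fix i j assume "i \<ge> N" "j \<ge> N"
      then have "\<kappa> * (norm (u i - u j))\<^sup>2 < \<kappa> * e\<^sup>2" using key N2 by (meson le_less_trans)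
      then have "(norm (u i - u j))\<^sup>2 < e\<^sup>2" using kp by simp
      then show "norm (u i - u j) < e" using e by (meson abs_le_square_iff abs_norm_cancel not_less power2_less_imp_less norm_ge_zero less_imp_le)
    qed
  qed
  then obtain x where x: "u \<longlonglongrightarrow> x" using Cauchy_convergent convergent_def by blast
  have xC: "x \<in> C" using closed_sequentially[OF C(1) u(1) x] .
  have "(\<lambda>n. F (u n)) \<longlonglongrightarrow> F x"
    by (rule continuous_on_tendsto_compose[OF Fc x xC]) (simp add: u(1))
  moreover have "(\<lambda>n. F (u n)) \<longlonglongrightarrow> m"
  proof (rule real_tendsto_sandwich[of "\<lambda>n. m" _ _ "\<lambda>n. m + 1/(real n + 1)"])
    show "\<forall>\<^sub>F n in sequentially. m \<le> F (u n)" using mle u(1) by simp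
    show "\<forall>\<^sub>F n in sequentially. F (u n) \<le> m + 1/(real n + 1)" using u(2) by (simp add: less_imp_le)
    show "(\<lambda>n. m) \<longlonglongrightarrow> m" by simp
    have "(\<lambda>n. m + inverse (real (Suc n))) \<longlonglongrightarrow> m" by (rule LIMSEQ_inverse_real_of_nat_add)
    then show "(\<lambda>n. m + 1/(real n + 1)) \<longlonglongrightarrow> m" by (simp add: inverse_eq_divide add.commute)
  qed
  ultimately have "F x = m" using LIMSEQ_unique by blast
  then show ?thesis using xC mle by auto
qed

lemma mid_norm_sq:
  fixes a c z :: "'a::real_inner"
  shows "(norm ((1/2) *\<^sub>R (a + c) - z))\<^sup>2
     = (norm (a - z))\<^sup>2 / 2 + (norm (c - z))\<^sup>2 / 2 - (norm (a - c))\<^sup>2 / 4"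
proof -
  have e: "(1/2) *\<^sub>R (a + c) - z = (1/2) *\<^sub>R ((a - z) + (c - z))"
  proof -
    have "(1/2) *\<^sub>R ((a - z) + (c - z)) = (1/2) *\<^sub>R (a + c) - (1/2) *\<^sub>R (z + z)"
      by (simp add: algebra_simps)
    also have "(1/2) *\<^sub>R (z + z) = z" by (simp add: scaleR_2[symmetric])
    finally show ?thesis by simp
  qed
  have e2: "a - c = (a - z) - (c - z)" by simp
  define u where "u = a - z"
  define v where "v = c - z"
  have "(norm ((1/2) *\<^sub>R (u + v)))\<^sup>2 = (norm u)\<^sup>2 / 2 + (norm v)\<^sup>2 / 2 - (norm (u - v))\<^sup>2 / 4"
    unfolding power2_norm_eq_inner
    by (simp add: inner_add_left inner_add_right inner_diff_left inner_diff_right inner_commute[of v u] field_simps)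
  then show ?thesis unfolding e e2 u_def v_def .
qed

lemma proj_exists:
  fixes C :: "'a::{real_inner,complete_space} set"
  assumes "closed C" "convex C" "C \<noteq> {}"
  shows "\<exists>p\<in>C. \<forall>y\<in>C. dist z p \<le> dist z y"
proof -
  have "\<exists>x\<in>C. \<forall>y\<in>C. (norm (x - z))\<^sup>2 \<le> (norm (y - z))\<^sup>2"
  proof (rule attain_min[where b=0 and \<kappa>="1/4"])
    show "continuous_on C (\<lambda>x. (norm (x - z))\<^sup>2)" by (intro continuous_intros)
    fix a c assume ac: "a \<in> C" "c \<in> C"
    have "(1/2) *\<^sub>R (a + c) \<in> C"
      using convexD[OF assms(2) ac, of "1/2" "1/2"] by (simp add: scaleR_right_distrib)
    then show "(1/2) *\<^sub>R (a + c) \<in> C \<and> (norm ((1/2) *\<^sub>R (a + c) - z))\<^sup>2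
        \<le> ((norm (a - z))\<^sup>2 + (norm (c - z))\<^sup>2) / 2 - 1/4 * (norm (a - c))\<^sup>2"
      by (simp add: mid_norm_sq add_divide_distrib)
  qed (use assms in auto)
  then obtain p where p: "p \<in> C" "\<forall>y\<in>C. (norm (p - z))\<^sup>2 \<le> (norm (y - z))\<^sup>2" by blast
  have "dist z p \<le> dist z y" if "y \<in> C" for y
    using p(2) that by (metis dist_commute dist_norm norm_ge_zero power2_le_imp_le)
  then show ?thesis using p(1) by blast
qed

lemma proj_props:
  fixes C :: "'a::{real_inner,complete_space} set"
  assumes "closed C" "convex C" "C \<noteq> {}"
  shows "proj C z \<in> C" "\<And>y. y \<in> C \<Longrightarrow> dist z (proj C z) \<le> dist z y"
    "\<And>y. y \<in> C \<Longrightarrow> inner (z - proj C z) (y - proj C z) \<le> 0"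
proof -
  have "proj C z \<in> C \<and> (\<forall>y \<in> C. dist z (proj C z) \<le> dist z y)"
    unfolding proj_def by (rule someI_ex) (use proj_exists[OF assms] in blast)
  then show "proj C z \<in> C" "\<And>y. y \<in> C \<Longrightarrow> dist z (proj C z) \<le> dist z y" by auto
  then show "\<And>y. y \<in> C \<Longrightarrow> inner (z - proj C z) (y - proj C z) \<le> 0"
    using any_closest_point_dot[OF assms(2,1)] by blast
qed

lemma sq_small:
  assumes "K \<ge> 0" "e > 0"
  shows "\<exists>N::nat. \<forall>n\<ge>N. K / (real n + 1) < e\<^sup>2"
proof -
  obtain N :: nat where N: "K / e\<^sup>2 < real N" using reals_Archimedean2 by blast
  have "K / (real n + 1) < e\<^sup>2" if "n \<ge> N" for n
  proof -
    have "K < real N * e\<^sup>2" using N assms by (simp add: divide_less_eq)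
    also have "\<dots> \<le> (real n + 1) * e\<^sup>2" using that by (intro mult_right_mono) auto
    finally have "K < (real n + 1) * e\<^sup>2" .
    then show ?thesis by (simp add: divide_less_eq mult.commute)
  qed
  then show ?thesis by blast
qed

lemma sq_bound_tendsto:
  fixes v :: "nat \<Rightarrow> 'a::real_normed_vector"
  assumes "K \<ge> 0" "\<And>n. (norm (v n))\<^sup>2 \<le> K / (real n + 1)"
  shows "v \<longlonglongrightarrow> 0"
proof (rule LIMSEQ_I)
  fix e :: real assume e: "e > 0"
  obtain N where N: "\<forall>n\<ge>N. K / (real n + 1) < e\<^sup>2" using sq_small[OF assms(1) e] by blast
  have "norm (v n - 0) < e" if "n \<ge> N" for n
  proof -
    have sq: "(norm (v n))\<^sup>2 < e\<^sup>2" using le_less_trans[OF assms(2)[of n]] N that by blast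
    have "norm (v n) < e" using power2_less_imp_less[OF sq] e by simp
    then show ?thesis by simp
  qed
  then show "\<exists>N. \<forall>n\<ge>N. norm (v n - 0) < e" by blast
qed

lemma sq_bound_Cauchy:
  fixes p :: "nat \<Rightarrow> 'a::real_normed_vector"
  assumes "K \<ge> 0" "\<And>n m. n \<le> m \<Longrightarrow> (norm (p n - p m))\<^sup>2 \<le> K / (real n + 1)"
  shows "Cauchy p"
proof (rule CauchyI)
  fix e :: real assume e: "e > 0"
  obtain N where N: "\<forall>n\<ge>N. K / (real n + 1) < (e/2)\<^sup>2" using sq_small[OF assms(1), of "e/2"] e by auto
  have b: "norm (p N - p n) < e/2" if "n \<ge> N" for n
  proof -
    have sq: "(norm (p N - p n))\<^sup>2 < (e/2)\<^sup>2" using le_less_trans[OF assms(2)[OF that]] N by blast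
    show ?thesis using power2_less_imp_less[OF sq] e by simp
  qed
  have "norm (p m - p n) < e" if "m \<ge> N" "n \<ge> N" for m n
  proof -
    have "p m - p n = (p N - p n) - (p N - p m)" by simp
    then have "norm (p m - p n) \<le> norm (p N - p m) + norm (p N - p n)"
      using norm_triangle_ineq4[of "p N - p n" "p N - p m"] by simp
    then show ?thesis using b[OF that(1)] b[OF that(2)] by linarith
  qed
  then show "\<exists>M. \<forall>m\<ge>M. \<forall>n\<ge>M. norm (p m - p n) < e" by blast
qed

lemma nested_inter:
  fixes Fam :: "'a::{real_inner,complete_space} set set" and z :: 'a
  assumes cc: "\<And>C. C \<in> Fam \<Longrightarrow> closed C \<and> convex C \<and> C \<noteq> {}"
    and dir: "\<And>C1 C2. C1 \<in> Fam \<Longrightarrow> C2 \<in> Fam \<Longrightarrow> \<exists>C3\<in>Fam. C3 \<subseteq> C1 \<inter> C2"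
    and bnd: "\<And>C. C \<in> Fam \<Longrightarrow> \<exists>x\<in>C. dist z x \<le> R"
    and ne: "Fam \<noteq> {}"
  shows "\<exists>q. \<forall>C\<in>Fam. q \<in> C"
proof -
  define d where "d C = dist z (proj C z)" for C
  have P_in: "proj C z \<in> C" if "C \<in> Fam" for C using proj_props(1) cc[OF that] by blast
  have P_le: "d C \<le> dist z y" if "C \<in> Fam" "y \<in> C" for C y
    unfolding d_def using proj_props(2) cc[OF that(1)] that(2) by blast
  have d_le: "d C \<le> R" if "C \<in> Fam" for C using bnd[OF that] P_le[OF that] by force
  have d_nn: "0 \<le> d C" for C unfolding d_def by simp
  have R_nn: "0 \<le> R" using ne d_le d_nn by (meson all_not_in_conv order_trans)
  have d_mono: "d C \<le> d C'" if "C \<in> Fam" "C' \<in> Fam" "C' \<subseteq> C" for C C'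
    using P_le[OF that(1)] P_in[OF that(2)] that(3) unfolding d_def[of C'] by blast
  have para: "(norm (proj C z - proj C' z))\<^sup>2 \<le> 2 * ((d C')\<^sup>2 - (d C)\<^sup>2)"
    if "C \<in> Fam" "C' \<in> Fam" "C' \<subseteq> C" for C C'
  proof -
    let ?a = "proj C z" and ?c = "proj C' z"
    have ac: "?a \<in> C" "?c \<in> C" using P_in that by auto
    have mC: "(1/2) *\<^sub>R (?a + ?c) \<in> C"
      using convexD[OF _ ac, of "1/2" "1/2"] cc[OF that(1)] by (simp add: scaleR_right_distrib)
    have "d C \<le> dist z ((1/2) *\<^sub>R (?a + ?c))" using P_le[OF that(1) mC] .
    then have "(d C)\<^sup>2 \<le> (norm ((1/2) *\<^sub>R (?a + ?c) - z))\<^sup>2"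
      using d_nn by (simp add: dist_norm norm_minus_commute power_mono)
    also have "\<dots> = (norm (?a - z))\<^sup>2 / 2 + (norm (?c - z))\<^sup>2 / 2 - (norm (?a - ?c))\<^sup>2 / 4"
      by (rule mid_norm_sq)
    also have "\<dots> = (d C)\<^sup>2 / 2 + (d C')\<^sup>2 / 2 - (norm (?a - ?c))\<^sup>2 / 4"
      unfolding d_def by (simp add: dist_norm norm_minus_commute)
    finally show ?thesis by simp
  qed
  define \<delta> where "\<delta> = Sup (d ` Fam)"
  have bdd: "bdd_above (d ` Fam)" unfolding bdd_above_def using d_le by auto
  have d_del: "d C \<le> \<delta>" if "C \<in> Fam" for C unfolding \<delta>_def using bdd that by (simp add: cSup_upper)
  have "\<forall>n::nat. \<exists>C\<in>Fam. \<delta> - 1/(real n + 1) < d C"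
  proof
    fix n :: nat
    have "\<delta> - 1/(real n + 1) < Sup (d ` Fam)" unfolding \<delta>_def by simp
    then show "\<exists>C\<in>Fam. \<delta> - 1/(real n + 1) < d C" using less_cSupD[of "d ` Fam"] ne by auto
  qed
  then obtain Cs where Cs: "\<And>n. Cs n \<in> Fam" "\<And>n. \<delta> - 1/(real n + 1) < d (Cs n)" by metis
  define E where "E = rec_nat (Cs 0) (\<lambda>n En. SOME E'. E' \<in> Fam \<and> E' \<subseteq> En \<inter> Cs (Suc n))"
  have E0: "E 0 = Cs 0" unfolding E_def by simp
  have ES: "E (Suc n) = (SOME E'. E' \<in> Fam \<and> E' \<subseteq> E n \<inter> Cs (Suc n))" for n unfolding E_def by simp
  have Eprop: "E n \<in> Fam \<and> E n \<subseteq> Cs n" for n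
  proof (induction n)
    case 0 then show ?case using E0 Cs by auto
  next
    case (Suc n)
    have "\<exists>E'. E' \<in> Fam \<and> E' \<subseteq> E n \<inter> Cs (Suc n)" using dir[of "E n" "Cs (Suc n)"] Suc Cs by auto
    from someI_ex[OF this] show ?case unfolding ES[symmetric] by auto
  qed
  have Edec: "E (Suc n) \<subseteq> E n" for n
  proof -
    have "\<exists>E'. E' \<in> Fam \<and> E' \<subseteq> E n \<inter> Cs (Suc n)" using dir[of "E n" "Cs (Suc n)"] Eprop Cs by auto
    from someI_ex[OF this] show ?thesis unfolding ES[symmetric] by auto
  qed
  have Emono: "E m \<subseteq> E n" if "n \<le> m" for n m
    using lift_Suc_antimono_le[of E, OF Edec that] by simp
  have gap: "\<delta>\<^sup>2 - (d (E n))\<^sup>2 \<le> 2 * R / (real n + 1)" for n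
  proof -
    have l: "\<delta> - 1/(real n + 1) < d (E n)" using Cs(2)[of n] d_mono[OF Cs(1)[of n] conjunct1[OF Eprop[of n]] conjunct2[OF Eprop[of n]]] by linarith
    have u: "d (E n) \<le> \<delta>" using d_del Eprop by blast
    have "\<delta> \<le> R" unfolding \<delta>_def using ne d_le by (auto intro!: cSup_least)
    then have "\<delta> + d (E n) \<le> 2 * R" using d_le[OF conjunct1[OF Eprop[of n]]] by linarith
    moreover have "0 \<le> \<delta> - d (E n)" using u by simp
    moreover have "\<delta> - d (E n) \<le> 1/(real n + 1)" using l by simp
    moreover have "0 \<le> \<delta> + d (E n)" using u d_nn[of "E n"] by linarith
    ultimately have "(\<delta> - d (E n)) * (\<delta> + d (E n)) \<le> 1/(real n + 1) * (2 * R)"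
      by (intro mult_mono) auto
    then show ?thesis by (simp add: power2_eq_square algebra_simps)
  qed
  define p where "p n = proj (E n) z" for n
  have dF: "(d F)\<^sup>2 \<le> \<delta>\<^sup>2" if "F \<in> Fam" for F using d_del[OF that] d_nn by (simp add: power_mono)
  have "Cauchy p"
  proof (rule sq_bound_Cauchy[of "4 * R"])
    show "0 \<le> 4 * R" using R_nn by simp
    fix n m :: nat assume nm: "n \<le> m"
    have "(norm (p n - p m))\<^sup>2 \<le> 2 * ((d (E m))\<^sup>2 - (d (E n))\<^sup>2)"
      unfolding p_def using para Eprop Emono[OF nm] by blast
    also have "\<dots> \<le> 2 * (\<delta>\<^sup>2 - (d (E n))\<^sup>2)" using dF Eprop by (smt (verit))
    also have "\<dots> \<le> 2 * (2 * R / (real n + 1))" using gap[of n] by simp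
    finally show "(norm (p n - p m))\<^sup>2 \<le> 4 * R / (real n + 1)" by simp
  qed
  then obtain q where q: "p \<longlonglongrightarrow> q" using Cauchy_convergent convergent_def by blast
  have "q \<in> C" if C: "C \<in> Fam" for C
  proof -
    have "\<forall>n. \<exists>F\<in>Fam. F \<subseteq> E n \<inter> C" using dir Eprop C by blast
    then obtain F where F: "\<And>n. F n \<in> Fam" "\<And>n. F n \<subseteq> E n \<inter> C" by metis
    define q' where "q' n = proj (F n) z" for n
    have "(\<lambda>n. p n - q' n) \<longlonglongrightarrow> 0"
    proof (rule sq_bound_tendsto[of "4 * R"])
      show "0 \<le> 4 * R" using R_nn by simp
      fix n
      have "(norm (p n - q' n))\<^sup>2 \<le> 2 * ((d (F n))\<^sup>2 - (d (E n))\<^sup>2)"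
        unfolding p_def q'_def using para Eprop F by blast
      also have "\<dots> \<le> 2 * (\<delta>\<^sup>2 - (d (E n))\<^sup>2)" using dF F by (smt (verit))
      also have "\<dots> \<le> 2 * (2 * R / (real n + 1))" using gap[of n] by simp
      finally show "(norm (p n - q' n))\<^sup>2 \<le> 4 * R / (real n + 1)" by simp
    qed
    then have "(\<lambda>n. p n - (p n - q' n)) \<longlonglongrightarrow> q - 0" by (intro tendsto_diff q)
    then have "q' \<longlonglongrightarrow> q" by simp
    moreover have "q' n \<in> C" for n unfolding q'_def using P_in[OF F(1)] F(2) by blast
    ultimately show "q \<in> C" using closed_sequentially cc[OF C] by blast
  qed
  then show ?thesis by blast
qed

lemma double_sum_mono:
  fixes u :: "nat \<Rightarrow> real" and y w :: "nat \<Rightarrow> 'a::real_inner"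
  assumes K: "finite K" and u: "\<forall>i\<in>K. 0 \<le> u i" "sum u K = 1"
    and mono: "\<forall>i\<in>K. \<forall>j\<in>K. inner (w i - w j) (y i - y j) \<ge> 0"
  shows "inner (\<Sum>i\<in>K. u i *\<^sub>R w i) (\<Sum>i\<in>K. u i *\<^sub>R y i) \<le> (\<Sum>i\<in>K. u i * inner (w i) (y i))"
proof -
  define S0 where "S0 = (\<Sum>i\<in>K. u i * inner (w i) (y i))"
  define VY where "VY = inner (\<Sum>i\<in>K. u i *\<^sub>R w i) (\<Sum>i\<in>K. u i *\<^sub>R y i)"
  have VY1: "VY = (\<Sum>i\<in>K. \<Sum>j\<in>K. u i * u j * inner (w j) (y i))"
    unfolding VY_def by (simp add: inner_sum_left inner_sum_right sum_distrib_left mult.assoc)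
  have VY2: "VY = (\<Sum>i\<in>K. \<Sum>j\<in>K. u i * u j * inner (w i) (y j))"
  proof -
    have "VY = (\<Sum>j\<in>K. \<Sum>i\<in>K. u i * u j * inner (w j) (y i))" unfolding VY1 by (rule sum.swap)
    also have "\<dots> = (\<Sum>i\<in>K. \<Sum>j\<in>K. u i * u j * inner (w i) (y j))"
      by (intro sum.cong refl) (simp add: mult.commute)
    finally show ?thesis .
  qed
  have T1: "(\<Sum>i\<in>K. \<Sum>j\<in>K. u i * u j * inner (w i) (y i)) = S0"
  proof -
    have "(\<Sum>i\<in>K. \<Sum>j\<in>K. u i * u j * inner (w i) (y i)) = (\<Sum>i\<in>K. u i * inner (w i) (y i) * sum u K)"
      by (simp add: sum_distrib_left sum_distrib_right mult_ac)
    then show ?thesis using u(2) by (simp add: S0_def)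
  qed
  have T4: "(\<Sum>i\<in>K. \<Sum>j\<in>K. u i * u j * inner (w j) (y j)) = S0"
  proof -
    have "(\<Sum>i\<in>K. \<Sum>j\<in>K. u i * u j * inner (w j) (y j)) = (\<Sum>j\<in>K. \<Sum>i\<in>K. u i * u j * inner (w j) (y j))"
      by (rule sum.swap)
    also have "\<dots> = (\<Sum>i\<in>K. \<Sum>j\<in>K. u i * u j * inner (w i) (y i))"
      by (intro sum.cong refl) (simp add: mult.commute)
    finally show ?thesis using T1 by simp
  qed
  have "0 \<le> (\<Sum>i\<in>K. \<Sum>j\<in>K. u i * u j * inner (w i - w j) (y i - y j))"
    using u(1) mono by (intro sum_nonneg mult_nonneg_nonneg) auto
  also have "\<dots> = (\<Sum>i\<in>K. \<Sum>j\<in>K. u i * u j * inner (w i) (y i)) - (\<Sum>i\<in>K. \<Sum>j\<in>K. u i * u j * inner (w i) (y j))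
      - (\<Sum>i\<in>K. \<Sum>j\<in>K. u i * u j * inner (w j) (y i)) + (\<Sum>i\<in>K. \<Sum>j\<in>K. u i * u j * inner (w j) (y j))"
    by (simp add: inner_diff_left inner_diff_right algebra_simps sum_subtractf sum.distrib)
  also have "\<dots> = 2 * S0 - 2 * VY" using T1 T4 VY1 VY2 by simp
  finally show ?thesis unfolding S0_def VY_def by simp
qed

definition gfun :: "('a::real_inner \<times> 'a) \<Rightarrow> 'a \<Rightarrow> real" where
  "gfun p x = - inner (x + snd p) (fst p - x)"

lemma gfun_expand: "gfun p x = (norm x)\<^sup>2 + inner x (snd p - fst p) - inner (snd p) (fst p)"
  unfolding gfun_def power2_norm_eq_inner
  by (simp add: inner_add_left inner_diff_right inner_diff_left inner_commute algebra_simps)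

lemma gfun_shift: "gfun p (x + h) = gfun p x + inner (2 *\<^sub>R x + snd p - fst p) h + (norm h)\<^sup>2"
  unfolding gfun_expand power2_norm_eq_inner
  by (simp add: inner_add_left inner_add_right inner_diff_left inner_diff_right inner_commute algebra_simps scaleR_2)

lemma gfun_mid: "gfun p ((1/2) *\<^sub>R (a + c)) = (gfun p a + gfun p c)/2 - (norm (a - c))\<^sup>2 / 4"
proof -
  have "(norm ((1/2) *\<^sub>R (a + c)))\<^sup>2 = (norm a)\<^sup>2/2 + (norm c)\<^sup>2/2 - (norm (a - c))\<^sup>2/4"
    using mid_norm_sq[of a c 0] by simp
  then show ?thesis unfolding gfun_expand by (simp add: inner_add_left field_simps)
qed

lemma gfun_cont: "continuous_on UNIV (gfun p)"
  unfolding gfun_def by (intro continuous_intros)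

lemma gfun_lb: "gfun p x \<ge> - (norm (snd p - fst p))\<^sup>2 / 4 - inner (snd p) (fst p)"
proof -
  let ?v = "snd p - fst p"
  have "0 \<le> (norm (x + (1/2) *\<^sub>R ?v))\<^sup>2" by simp
  also have "\<dots> = (norm x)\<^sup>2 + inner x ?v + (norm ?v)\<^sup>2 / 4"
    unfolding power2_norm_eq_inner by (simp add: inner_add_left inner_add_right inner_commute)
  finally show ?thesis unfolding gfun_expand by simp
qed

lemma continuous_on_Max_fun:
  assumes "finite S" "S \<noteq> {}" "\<And>p. p \<in> S \<Longrightarrow> continuous_on U (f p)"
  shows "continuous_on U (\<lambda>x. Max ((\<lambda>p. f p x) ` S) :: real)"
  using assms
proof (induction S rule: finite_ne_induct)
  case (singleton p) then show ?case by simp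
next
  case (insert p F)
  have "continuous_on U (\<lambda>x. max (f p x) (Max ((\<lambda>p. f p x) ` F)))"
    using insert by (intro continuous_on_max) auto
  then show ?case using insert by simp
qed

lemma DF_finite:
  fixes S :: "('a::{real_inner,complete_space} \<times> 'a) set"
  assumes fin: "finite S"
    and mono: "\<And>p q. p \<in> S \<Longrightarrow> q \<in> S \<Longrightarrow> inner (snd p - snd q) (fst p - fst q) \<ge> 0"
  shows "\<exists>x. \<forall>p\<in>S. gfun p x \<le> 0"
proof (cases "S = {}")
  case True then show ?thesis by simp
next
  case False
  define F where "F x = Max ((\<lambda>p. gfun p x) ` S)" for x
  have Fge: "gfun p x \<le> F x" if "p \<in> S" for p x unfolding F_def using fin that by simp
  obtain p0 where p0: "p0 \<in> S" using False by blast
  have "\<exists>x\<in>UNIV. \<forall>y\<in>UNIV. F x \<le> F y"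
  proof (rule attain_min[where b="- (norm (snd p0 - fst p0))\<^sup>2 / 4 - inner (snd p0) (fst p0)" and \<kappa>="1/4"])
    show "continuous_on UNIV F" unfolding F_def
      by (rule continuous_on_Max_fun[OF fin False gfun_cont])
    show "\<forall>x\<in>UNIV. - (norm (snd p0 - fst p0))\<^sup>2 / 4 - inner (snd p0) (fst p0) \<le> F x"
      using gfun_lb Fge[OF p0] order_trans by blast
    fix a c :: 'a
    have "F ((1/2) *\<^sub>R (a + c)) \<le> (F a + F c)/2 - 1/4 * (norm (a - c))\<^sup>2"
      unfolding F_def[of "(1/2) *\<^sub>R (a + c)"]
    proof (rule Max.boundedI)
      show "finite ((\<lambda>p. gfun p ((1/2) *\<^sub>R (a + c))) ` S)" using fin by simp
      show "(\<lambda>p. gfun p ((1/2) *\<^sub>R (a + c))) ` S \<noteq> {}" using False by simp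
      fix t assume "t \<in> (\<lambda>p. gfun p ((1/2) *\<^sub>R (a + c))) ` S"
      then obtain p where p: "p \<in> S" "t = gfun p ((1/2) *\<^sub>R (a + c))" by blast
      show "t \<le> (F a + F c)/2 - 1/4 * (norm (a - c))\<^sup>2"
        unfolding p(2) gfun_mid using Fge[OF p(1), of a] Fge[OF p(1), of c] by (simp add: field_simps)
    qed
    then show "(1/2) *\<^sub>R (a + c) \<in> UNIV \<and> F ((1/2) *\<^sub>R (a + c)) \<le> (F a + F c)/2 - 1/4 * (norm (a - c))\<^sup>2"
      by simp
  qed auto
  then obtain xs where xs: "\<And>y. F xs \<le> F y" by blast
  define m where "m = F xs"
  define I where "I = {p\<in>S. gfun p xs = m}"
  define grad where "grad p = 2 *\<^sub>R xs + snd p - fst p" for p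
  have "m \<in> (\<lambda>p. gfun p xs) ` S" unfolding m_def F_def using fin False by (intro Max_in) auto
  then have Ine: "I \<noteq> {}" unfolding I_def by auto
  have Ifin: "finite I" unfolding I_def using fin by simp
  have inact: "gfun p xs < m" if "p \<in> S" "p \<notin> I" for p
    using Fge[OF that(1), of xs] that unfolding I_def m_def by auto
  define W where "W = convex hull (grad ` I)"
  have Wcc: "closed W" "convex W" "W \<noteq> {}"
    unfolding W_def using Ine Ifin
    by (auto simp: compact_imp_closed finite_imp_compact_convex_hull convex_convex_hull)
  define \<omega> where "\<omega> = proj W 0"
  have \<omega>W: "\<omega> \<in> W" unfolding \<omega>_def using proj_props(1)[OF Wcc] .
  have \<omega>var: "inner \<omega> \<zeta> \<ge> (norm \<omega>)\<^sup>2" if "\<zeta> \<in> W" for \<zeta>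
  proof -
    have "inner (0 - \<omega>) (\<zeta> - \<omega>) \<le> 0" unfolding \<omega>_def using proj_props(3)[OF Wcc that] .
    then show ?thesis by (simp add: inner_diff_right power2_norm_eq_inner)
  qed
  have gradW: "grad p \<in> W" if "p \<in> I" for p unfolding W_def using that by (simp add: hull_inc)
  have \<omega>0: "\<omega> = 0"
  proof (rule ccontr)
    assume nz: "\<omega> \<noteq> 0"
    have gexp: "gfun p (xs - t *\<^sub>R \<omega>) = gfun p xs - t * inner (grad p) \<omega> + t\<^sup>2 * (norm \<omega>)\<^sup>2" for p t
      using gfun_shift[of p xs "- (t *\<^sub>R \<omega>)"] unfolding grad_def
      by (simp add: power_mult_distrib)
    have ev: "\<forall>\<^sub>F t in at_right (0::real). gfun p (xs - t *\<^sub>R \<omega>) < m" if p: "p \<in> S" for p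
    proof (cases "p \<in> I")
      case True
      have "\<forall>\<^sub>F t in at_right (0::real). t < 1"
        using order_tendstoD(2)[OF tendsto_ident_at[of "0::real" "{0<..}"], of 1]
        by (simp add: at_right_eq)
      moreover have "\<forall>\<^sub>F t in at_right (0::real). 0 < t" by (rule eventually_at_right_less)
      ultimately show ?thesis
      proof eventually_elim
        case (elim t)
        have pos: "(norm \<omega>)\<^sup>2 > 0" using nz by simp
        have "t * (norm \<omega>)\<^sup>2 \<le> t * inner (grad p) \<omega>"
          using \<omega>var[OF gradW[OF True]] elim by (simp add: inner_commute)
        moreover have "t\<^sup>2 * (norm \<omega>)\<^sup>2 < t * (norm \<omega>)\<^sup>2"
        proof -
          have "t * (norm \<omega>)\<^sup>2 < 1 * (norm \<omega>)\<^sup>2" using elim pos by (intro mult_strict_right_mono) auto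
          then have "t * (t * (norm \<omega>)\<^sup>2) < t * (1 * (norm \<omega>)\<^sup>2)" using elim by (intro mult_strict_left_mono) auto
          then show ?thesis by (simp add: power2_eq_square mult.assoc)
        qed
        moreover have "gfun p xs = m" using True unfolding I_def by simp
        ultimately show ?case unfolding gexp by linarith
      qed
    next
      case False
      have "((\<lambda>t. gfun p xs - t * inner (grad p) \<omega> + t\<^sup>2 * (norm \<omega>)\<^sup>2) \<longlongrightarrow>
              gfun p xs - 0 * inner (grad p) \<omega> + 0\<^sup>2 * (norm \<omega>)\<^sup>2) (at_right (0::real))"
        by (intro tendsto_intros)
      then have "((\<lambda>t. gfun p xs - t * inner (grad p) \<omega> + t\<^sup>2 * (norm \<omega>)\<^sup>2) \<longlongrightarrow> gfun p xs) (at_right (0::real))"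
        by simp
      from order_tendstoD(2)[OF this inact[OF p False]] show ?thesis unfolding gexp .
    qed
    have "\<forall>\<^sub>F t in at_right (0::real). \<forall>p\<in>S. gfun p (xs - t *\<^sub>R \<omega>) < m"
      using fin ev by (simp add: eventually_ball_finite)
    then obtain t :: real where t: "\<forall>p\<in>S. gfun p (xs - t *\<^sub>R \<omega>) < m"
      using eventually_happens[of _ "at_right (0::real)"] by auto
    have "F (xs - t *\<^sub>R \<omega>) < m" unfolding F_def using fin False t by simp
    then show False using xs[of "xs - t *\<^sub>R \<omega>"] unfolding m_def by simp
  qed
  have h0: "0 \<in> convex hull (grad ` I)" using \<omega>W \<omega>0 unfolding W_def by simp
  have "\<exists>k u z. (\<forall>i\<in>{1::nat..k}. 0 \<le> u i \<and> z i \<in> grad ` I) \<and> sum u {1..k} = 1 \<and>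
    (\<Sum>i = 1..k. u i *\<^sub>R z i) = 0"
    using h0 unfolding convex_hull_indexed mem_Collect_eq .
  then obtain k u z where kuz: "\<forall>i\<in>{1::nat..k}. 0 \<le> u i \<and> z i \<in> grad ` I" "sum u {1..k} = 1"
    "(\<Sum>i = 1..k. u i *\<^sub>R z i) = 0"
    by (elim exE conjE) (rule that, assumption+)
  have "\<forall>i\<in>{1..k}. \<exists>p\<in>I. z i = grad p" using kuz(1) by auto
  then obtain P where P: "\<And>i. i \<in> {1..k} \<Longrightarrow> P i \<in> I \<and> z i = grad (P i)" by metis
  define Y where "Y = (\<Sum>i = 1..k. u i *\<^sub>R fst (P i))"
  define V where "V = (\<Sum>i = 1..k. u i *\<^sub>R snd (P i))"
  have "(\<Sum>i = 1..k. u i *\<^sub>R z i) = (\<Sum>i = 1..k. u i *\<^sub>R grad (P i))"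
    by (intro sum.cong refl) (use P in simp)
  then have "0 = (\<Sum>i = 1..k. u i *\<^sub>R grad (P i))" using kuz(3) by simp
  also have "\<dots> = (\<Sum>i = 1..k. u i *\<^sub>R (2 *\<^sub>R xs)) + V - Y"
    unfolding grad_def V_def Y_def by (simp add: scaleR_add_right scaleR_diff_right sum.distrib sum_subtractf)
  also have "(\<Sum>i = 1..k. u i *\<^sub>R (2 *\<^sub>R xs)) = 2 *\<^sub>R xs"
    using scaleR_sum_left[of u "{1..k}" "2 *\<^sub>R xs", symmetric] kuz(2) by simp
  finally have xsYV: "xs = (1/2) *\<^sub>R (Y - V)"
    by (simp add: algebra_simps)
  have "m = (\<Sum>i = 1..k. u i * gfun (P i) xs)"
  proof -
    have "(\<Sum>i = 1..k. u i * gfun (P i) xs) = (\<Sum>i = 1..k. u i * m)"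
      using P unfolding I_def by (intro sum.cong) auto
    then show ?thesis using kuz(2) by (simp add: sum_distrib_right[symmetric])
  qed
  also have "\<dots> = (\<Sum>i = 1..k. u i * ((norm xs)\<^sup>2 + inner xs (snd (P i) - fst (P i)))) -
      (\<Sum>i = 1..k. u i * inner (snd (P i)) (fst (P i)))"
    unfolding gfun_expand by (simp add: algebra_simps sum_subtractf sum.distrib)
  also have "(\<Sum>i = 1..k. u i * ((norm xs)\<^sup>2 + inner xs (snd (P i) - fst (P i)))) =
      (norm xs)\<^sup>2 + inner xs (V - Y)"
    using kuz(2) unfolding V_def Y_def
    by (simp add: algebra_simps sum.distrib inner_sum_right sum_subtractf sum_distrib_right[symmetric])
  finally have m_eq: "m = (norm xs)\<^sup>2 + inner xs (V - Y) - (\<Sum>i = 1..k. u i * inner (snd (P i)) (fst (P i)))" .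
  have "inner V Y \<le> (\<Sum>i = 1..k. u i * inner (snd (P i)) (fst (P i)))"
    unfolding V_def Y_def
  proof (rule double_sum_mono)
    show "\<forall>i\<in>{1..k}. \<forall>j\<in>{1..k}. 0 \<le> inner (snd (P i) - snd (P j)) (fst (P i) - fst (P j))"
      using P mono unfolding I_def by blast
  qed (use kuz in auto)
  then have "m \<le> (norm xs)\<^sup>2 + inner xs (V - Y) - inner V Y" using m_eq by linarith
  also have "\<dots> = - (norm (Y + V))\<^sup>2 / 4"
    unfolding xsYV power2_norm_eq_inner
    by (simp add: inner_add_left inner_add_right inner_diff_left inner_diff_right inner_commute algebra_simps)
  also have "\<dots> \<le> 0" by simp
  finally have "m \<le> 0" .
  then show ?thesis using Fge m_def by (meson order_trans)
qed

lemma nsq_diff: "(norm (x - y))\<^sup>2 = (norm x)\<^sup>2 - 2 * inner x y + (norm (y::'a::real_inner))\<^sup>2"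
  unfolding power2_norm_eq_inner by (simp add: inner_diff_left inner_diff_right inner_commute)
lemma nsq_add: "(norm (x + y))\<^sup>2 = (norm x)\<^sup>2 + 2 * inner x y + (norm (y::'a::real_inner))\<^sup>2"
  unfolding power2_norm_eq_inner by (simp add: inner_add_left inner_add_right inner_commute)
lemma ball_identity: "(norm (x - (1/2) *\<^sub>R (a - b)))\<^sup>2 - (norm (a + b))\<^sup>2 / 4 = (norm x)\<^sup>2 + inner x (b - a) - inner b (a::'a::real_inner)"
proof -
  have "(norm (x - (1/2) *\<^sub>R (a - b)))\<^sup>2 = (norm x)\<^sup>2 - inner x (a - b) + (norm (a - b))\<^sup>2 / 4"
  proof -
    have h: "(norm ((1/2) *\<^sub>R (a - b)))\<^sup>2 = (norm (a - b))\<^sup>2 / 4"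
      by (simp add: power_mult_distrib power2_eq_square)
    have h2: "inner x ((1/2) *\<^sub>R (a - b)) = inner x (a - b) / 2" by simp
    show ?thesis using nsq_diff[of x "(1/2) *\<^sub>R (a - b)"] h h2 by simp
  qed
  moreover have "(norm (a - b))\<^sup>2 - (norm (a + b))\<^sup>2 = - 4 * inner b a"
    unfolding nsq_diff nsq_add by (simp add: inner_commute)
  moreover have "inner x (a - b) = - inner x (b - a)" by (simp add: inner_diff_right)
  ultimately show ?thesis by (simp add: field_simps)
qed

lemma gfun_ball:
  "gfun p x = (norm (x - (1/2) *\<^sub>R (fst p - snd p)))\<^sup>2 - (norm (fst p + snd p))\<^sup>2 / 4"
  unfolding gfun_expand using ball_identity[of x "fst p" "snd p"] by simp

lemma gfun_K: "{x. gfun p x \<le> 0} = cball ((1/2) *\<^sub>R (fst p - snd p)) (norm (fst p + snd p) / 2)"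
proof -
  let ?c = "(1/2) *\<^sub>R (fst p - snd p)" and ?r = "norm (fst p + snd p) / 2"
  have r2: "?r\<^sup>2 = (norm (fst p + snd p))\<^sup>2 / 4" by (simp add: power_divide)
  have "gfun p x \<le> 0 \<longleftrightarrow> dist ?c x \<le> ?r" for x
  proof -
    have e1: "gfun p x \<le> 0 \<longleftrightarrow> (norm (x - ?c))\<^sup>2 \<le> ?r\<^sup>2"
      unfolding gfun_ball r2 by simp
    have e2: "(norm (x - ?c))\<^sup>2 \<le> ?r\<^sup>2 \<longleftrightarrow> norm (x - ?c) \<le> ?r"
    proof
      assume "(norm (x - ?c))\<^sup>2 \<le> ?r\<^sup>2" then show "norm (x - ?c) \<le> ?r"
        by (rule power2_le_imp_le) simp
    next
      assume "norm (x - ?c) \<le> ?r" then show "(norm (x - ?c))\<^sup>2 \<le> ?r\<^sup>2"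
        by (rule power_mono) simp
    qed
    have e3: "dist ?c x = norm (x - ?c)" by (simp add: dist_norm norm_minus_commute)
    show ?thesis unfolding e1 e2 e3 ..
  qed
  then show ?thesis unfolding mem_cball[symmetric] by blast
qed

lemma DF:
  fixes G :: "('a::{real_inner,complete_space} \<times> 'a) set"
  assumes mono: "\<And>p q. p \<in> G \<Longrightarrow> q \<in> G \<Longrightarrow> inner (snd p - snd q) (fst p - fst q) \<ge> 0"
  shows "\<exists>x. \<forall>p\<in>G. gfun p x \<le> 0"
proof (cases "G = {}")
  case True then show ?thesis by simp
next
  case False
  then obtain p0 where p0: "p0 \<in> G" by blast
  define K where "K p = {x. gfun p x \<le> 0}" for p :: "'a \<times> 'a"
  have Kc: "closed (K p)" "convex (K p)" for p unfolding K_def gfun_K by auto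
  define Fam where "Fam = {(\<Inter>p\<in>insert p0 S. K p) | S. finite S \<and> S \<subseteq> G}"
  define R where "R = norm ((1/2) *\<^sub>R (fst p0 - snd p0)) + norm (fst p0 + snd p0) / 2"
  have "\<exists>q. \<forall>C\<in>Fam. q \<in> C"
  proof (rule nested_inter[where z=0 and R=R])
    fix C assume "C \<in> Fam"
    then obtain S where S: "finite S" "S \<subseteq> G" "C = (\<Inter>p\<in>insert p0 S. K p)" unfolding Fam_def by blast
    have "\<exists>x. \<forall>p\<in>insert p0 S. gfun p x \<le> 0"
      using S p0 by (intro DF_finite) (auto intro: mono)
    then have ne: "C \<noteq> {}" using S(3) unfolding K_def by auto
    have "closed C" unfolding S(3) using Kc(1) by (intro closed_INT) blast
    moreover have "convex C" unfolding S(3) using Kc(2) by (intro convex_INT) blast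
    ultimately show "closed C \<and> convex C \<and> C \<noteq> {}" using ne by blast
    from ne obtain x where x: "x \<in> C" by blast
    then have "x \<in> K p0" using S(3) by simp
    then have "dist ((1/2) *\<^sub>R (fst p0 - snd p0)) x \<le> norm (fst p0 + snd p0) / 2"
      unfolding K_def gfun_K by simp
    then have "dist 0 x \<le> R" unfolding R_def using dist_triangle[of 0 x "(1/2) *\<^sub>R (fst p0 - snd p0)"]
      by (simp add: dist_commute)
    then show "\<exists>x\<in>C. dist 0 x \<le> R" using x by blast
  next
    fix C1 C2 assume "C1 \<in> Fam" "C2 \<in> Fam"
    then obtain S1 S2 where S: "finite S1" "S1 \<subseteq> G" "C1 = (\<Inter>p\<in>insert p0 S1. K p)"
      "finite S2" "S2 \<subseteq> G" "C2 = (\<Inter>p\<in>insert p0 S2. K p)" unfolding Fam_def by blast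
    have "(\<Inter>p\<in>insert p0 (S1 \<union> S2). K p) \<in> Fam" unfolding Fam_def using S
      by (intro CollectI exI[of _ "S1 \<union> S2"]) simp
    moreover have "(\<Inter>p\<in>insert p0 (S1 \<union> S2). K p) \<subseteq> C1 \<inter> C2" using S by auto
    ultimately show "\<exists>C3\<in>Fam. C3 \<subseteq> C1 \<inter> C2" by blast
  next
    have "(\<Inter>p\<in>insert p0 {}. K p) \<in> Fam" unfolding Fam_def by (intro CollectI exI[of _ "{}"]) simp
    then show "Fam \<noteq> {}" by blast
  qed
  then obtain q where q: "\<forall>C\<in>Fam. q \<in> C" by blast
  have "gfun p q \<le> 0" if "p \<in> G" for p
  proof -
    have h: "(\<Inter>p\<in>insert p0 {p}. K p) \<in> Fam" unfolding Fam_def using that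
      by (intro CollectI exI[of _ "{p}"]) simp
    have "q \<in> (\<Inter>p\<in>insert p0 {p}. K p)" by (rule bspec[OF q h])
    then have "q \<in> K p" by simp
    then show ?thesis unfolding K_def by simp
  qed
  then show ?thesis by blast
qed

lemma maxmono_mono:
  assumes "maximal_monotone B" "u \<in> B x" "v \<in> B y"
  shows "inner (u - v) (x - y) \<ge> 0"
  using assms unfolding maximal_monotone_def monotone_op_def by blast

lemma maxmono_max:
  assumes "maximal_monotone B" "\<And>y v. v \<in> B y \<Longrightarrow> inner (u - v) (x - y) \<ge> 0"
  shows "u \<in> B x"
  using assms unfolding maximal_monotone_def by blast

lemma resolvent_props:
  fixes B :: "'a::{real_inner,complete_space} \<Rightarrow> 'a set"
  assumes B: "maximal_monotone B" and s: "\<sigma> > 0"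
  shows "\<exists>u\<in>B (resolvent \<sigma> B z). z = resolvent \<sigma> B z + \<sigma> *\<^sub>R u"
proof -
  define G where "G = {(y, \<sigma> *\<^sub>R v - z) | y v. v \<in> B y}"
  have "\<exists>x. \<forall>p\<in>G. gfun p x \<le> 0"
  proof (rule DF)
    fix p q assume "p \<in> G" "q \<in> G"
    then obtain y v y' v' where pq: "p = (y, \<sigma> *\<^sub>R v - z)" "v \<in> B y" "q = (y', \<sigma> *\<^sub>R v' - z)" "v' \<in> B y'"
      unfolding G_def by blast
    have "inner (v - v') (y - y') \<ge> 0" using maxmono_mono[OF B pq(2) pq(4)] .
    then have "0 \<le> \<sigma> * inner (v - v') (y - y')" using s by simp
    then show "inner (snd p - snd q) (fst p - fst q) \<ge> 0" using pq
      by (simp add: scaleR_diff_right[symmetric])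
  qed
  then obtain x where x: "\<forall>p\<in>G. gfun p x \<le> 0" by blast
  define u where "u = (1/\<sigma>) *\<^sub>R (z - x)"
  have "u \<in> B x"
  proof (rule maxmono_max[OF B])
    fix y v assume v: "v \<in> B y"
    have "(y, \<sigma> *\<^sub>R v - z) \<in> G" unfolding G_def using v by blast
    then have "gfun (y, \<sigma> *\<^sub>R v - z) x \<le> 0" using x by blast
    then have "0 \<le> inner (x + (\<sigma> *\<^sub>R v - z)) (y - x)" unfolding gfun_def by simp
    also have "inner (x + (\<sigma> *\<^sub>R v - z)) (y - x) = \<sigma> * inner (u - v) (x - y)"
      unfolding u_def using s by (simp add: inner_diff_left inner_diff_right inner_add_left algebra_simps)
    finally show "inner (u - v) (x - y) \<ge> 0" using s by (simp add: zero_le_mult_iff)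
  qed
  moreover have "z = x + \<sigma> *\<^sub>R u" unfolding u_def using s by simp
  ultimately have ex: "\<exists>u\<in>B x. z = x + \<sigma> *\<^sub>R u" by blast
  have uniq: "x1 = x2" if h1: "\<exists>u\<in>B x1. z = x1 + \<sigma> *\<^sub>R u" and h2: "\<exists>u\<in>B x2. z = x2 + \<sigma> *\<^sub>R u" for x1 x2
  proof -
    obtain u1 u2 where u: "u1 \<in> B x1" "z = x1 + \<sigma> *\<^sub>R u1" "u2 \<in> B x2" "z = x2 + \<sigma> *\<^sub>R u2" using h1 h2 by blast
    have m: "inner (u1 - u2) (x1 - x2) \<ge> 0" using maxmono_mono[OF B u(1) u(3)] .
    have "x1 - x2 = \<sigma> *\<^sub>R (u2 - u1)" using u(2) u(4) by (simp add: algebra_simps)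
    then have "inner (x1 - x2) (x1 - x2) = \<sigma> * inner (u2 - u1) (x1 - x2)" by simp
    also have "inner (u2 - u1) (x1 - x2) = - inner (u1 - u2) (x1 - x2)" by (simp add: inner_diff_left)
    finally have "inner (x1 - x2) (x1 - x2) = - \<sigma> * inner (u1 - u2) (x1 - x2)" by simp
    then have "inner (x1 - x2) (x1 - x2) \<le> 0" using m s by (simp add: mult_nonneg_nonneg)
    then have "inner (x1 - x2) (x1 - x2) = 0" using inner_ge_zero[of "x1 - x2"] by linarith
    then show ?thesis by simp
  qed
  have "\<exists>!x. \<exists>u\<in>B x. z = x + \<sigma> *\<^sub>R u" using ex uniq by blast
  from theI'[OF this] show ?thesis unfolding resolvent_def .
qed

lemma fb_props:
  fixes B :: "'a::{real_inner,complete_space} \<Rightarrow> 'a set"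
  assumes B: "maximal_monotone B" and s: "\<sigma> > 0"
  shows "(1/\<sigma>) *\<^sub>R (x - fb_point A B \<sigma> x) - A x \<in> B (fb_point A B \<sigma> x)"
proof -
  let ?y = "fb_point A B \<sigma> x"
  obtain u where u: "u \<in> B ?y" "x - \<sigma> *\<^sub>R A x = ?y + \<sigma> *\<^sub>R u"
    using resolvent_props[OF B s, of "x - \<sigma> *\<^sub>R A x"] unfolding fb_point_def by blast
  have "u = (1/\<sigma>) *\<^sub>R (x - ?y) - A x"
  proof -
    have "\<sigma> *\<^sub>R u = x - ?y - \<sigma> *\<^sub>R A x" using u(2) by (simp add: algebra_simps)
    then have "(1/\<sigma>) *\<^sub>R (\<sigma> *\<^sub>R u) = (1/\<sigma>) *\<^sub>R (x - ?y - \<sigma> *\<^sub>R A x)" by simp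
    then show ?thesis using s by (simp add: scaleR_diff_right)
  qed
  then show ?thesis using u(1) by simp
qed

lemma uc_chain:
  fixes f :: "'a::real_normed_vector \<Rightarrow> 'b::real_normed_vector"
  assumes d: "\<And>x y. norm (x - y) < d \<Longrightarrow> norm (f x - f y) < e" and \<eta>: "0 < \<eta>" "\<eta> < d"
  shows "norm (x - y) \<le> real n * \<eta> \<Longrightarrow> norm (f x - f y) \<le> real n * e"
proof (induction n arbitrary: x)
  case 0 then show ?case by simp
next
  case (Suc n)
  define m where "m = x + (1 / (real n + 1)) *\<^sub>R (y - x)"
  have xm: "x - m = - ((1 / (real n + 1)) *\<^sub>R (y - x))" unfolding m_def by simp
  have my: "m - y = (real n / (real n + 1)) *\<^sub>R (x - y)"
  proof -
    have "m - y = (x - y) - (1 / (real n + 1)) *\<^sub>R (x - y)" unfolding m_def by (simp add: algebra_simps)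
    also have "\<dots> = (1 - 1 / (real n + 1)) *\<^sub>R (x - y)" by (simp add: scaleR_diff_left)
    also have "1 - 1 / (real n + 1) = real n / (real n + 1)" by (simp add: field_simps)
    finally show ?thesis .
  qed
  have n1: "norm (x - m) = norm (x - y) / (real n + 1)"
    unfolding xm by (simp add: norm_minus_commute)
  have "norm (x - m) \<le> \<eta>"
  proof -
    have "norm (x - y) \<le> (real n + 1) * \<eta>" using Suc.prems by (simp add: add.commute)
    then show ?thesis unfolding n1 by (simp add: divide_le_eq mult.commute)
  qed
  then have "norm (f x - f m) < e" using d \<eta> by simp
  moreover have "norm (m - y) \<le> real n * \<eta>"
  proof -
    have "norm (m - y) = real n / (real n + 1) * norm (x - y)" unfolding my by simp
    also have "\<dots> \<le> real n / (real n + 1) * ((real n + 1) * \<eta>)"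
      using Suc.prems by (intro mult_left_mono) (auto simp: add.commute)
    also have "\<dots> = real n * \<eta>" by simp
    finally show ?thesis .
  qed
  then have "norm (f m - f y) \<le> real n * e" using Suc.IH by simp
  moreover have "norm (f x - f y) \<le> norm (f x - f m) + norm (f m - f y)"
    using norm_triangle_ineq[of "f x - f m" "f m - f y"] by simp
  ultimately have "norm (f x - f y) \<le> e + real n * e" by linarith
  then show ?case by (simp add: ring_distribs)
qed

lemma uc_linear_growth:
  fixes f :: "'a::real_normed_vector \<Rightarrow> 'b::real_normed_vector"
  assumes uc: "uniformly_continuous_on UNIV f" and e: "e > 0"
  shows "\<exists>\<eta>>0. \<forall>x y. norm (f x - f y) \<le> e * (norm (x - y) / \<eta> + 1)"
proof -
  obtain d where d: "d > 0" "\<And>x y. dist y x < d \<Longrightarrow> dist (f y) (f x) < e"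
    using uc e unfolding uniformly_continuous_on_def by blast
  have d': "norm (x - y) < d \<Longrightarrow> norm (f x - f y) < e" for x y
    using d(2)[of y x] d(2)[of x y] by (auto simp add: dist_norm norm_minus_commute)
  define \<eta> where "\<eta> = d / 2"
  have \<eta>: "0 < \<eta>" "\<eta> < d" unfolding \<eta>_def using d by auto
  have "norm (f x - f y) \<le> e * (norm (x - y) / \<eta> + 1)" for x y
  proof -
    define n where "n = nat \<lceil>norm (x - y) / \<eta>\<rceil>"
    have n1: "norm (x - y) / \<eta> \<le> real n" unfolding n_def by linarith
    have n2: "real n \<le> norm (x - y) / \<eta> + 1" unfolding n_def using \<eta> by (simp add: nat_le_iff_add)
    have "norm (x - y) \<le> real n * \<eta>" using n1 \<eta> by (simp add: divide_le_eq)
    then have "norm (f x - f y) \<le> real n * e" using uc_chain[of d f e \<eta> x y n] d' \<eta> by blast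
    also have "\<dots> \<le> (norm (x - y) / \<eta> + 1) * e" using n2 e by (intro mult_right_mono) auto
    finally show ?thesis by (simp add: mult.commute)
  qed
  then show ?thesis using \<eta> by blast
qed

lemma coco_lip:
  assumes "cocoercive \<beta> F" "\<beta> > 0"
  shows "\<beta> * norm (F x - F y) \<le> norm (x - y)"
proof (cases "F x = F y")
  case True then show ?thesis by simp
next
  case False
  have "\<beta> * (norm (F x - F y))\<^sup>2 \<le> inner (F x - F y) (x - y)" using assms unfolding cocoercive_def by blast
  also have "\<dots> \<le> norm (F x - F y) * norm (x - y)" by (rule norm_cauchy_schwarz)
  finally have "(\<beta> * norm (F x - F y)) * norm (F x - F y) \<le> norm (x - y) * norm (F x - F y)"
    by (simp add: power2_eq_square mult_ac)
  then show ?thesis using False by (simp add: mult_le_cancel_right)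
qed

lemma coco_mono:
  assumes "cocoercive \<beta> F" "\<beta> > 0"
  shows "inner (F x - F y) (x - y) \<ge> 0"
proof -
  have "\<beta> * (norm (F x - F y))\<^sup>2 \<le> inner (F x - F y) (x - y)" using assms unfolding cocoercive_def by blast
  moreover have "\<beta> * (norm (F x - F y))\<^sup>2 \<ge> 0" using assms by simp
  ultimately show ?thesis by linarith
qed

lemma ratio_real:
  fixes a b s1 s2 :: real
  assumes "0 < s1" "s1 \<le> s2" "0 \<le> a" "0 \<le> b" "s2 * a\<^sup>2 + s1 * b\<^sup>2 \<le> (s1 + s2) * (a * b)"
  shows "a \<le> b \<and> s1 * b \<le> s2 * a"
proof -
  have prod: "(s2 * a - s1 * b) * (a - b) \<le> 0" using assms(5) by (simp add: algebra_simps power2_eq_square)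
  have ab: "a \<le> b"
  proof (rule ccontr)
    assume "\<not> a \<le> b"
    then have "a > b" by simp
    then have "s1 * b < s1 * a" using assms by simp
    also have "\<dots> \<le> s2 * a" using assms by (intro mult_right_mono) auto
    finally have "0 < (s2 * a - s1 * b) * (a - b)" using \<open>a > b\<close> by (intro mult_pos_pos) auto
    then show False using prod by simp
  qed
  moreover have "s1 * b \<le> s2 * a"
  proof (rule ccontr)
    assume c: "\<not> s1 * b \<le> s2 * a"
    show False
    proof (cases "a = b")
      case True
      then have "s2 * b < s1 * b" using c by simp
      then have "s2 < s1" using assms(4) by (metis mult_right_less_imp_less)
      then show False using assms by simp
    next
      case False
      then have "a < b" using ab by simp
      then have "0 < (s2 * a - s1 * b) * (a - b)" using c by (intro mult_neg_neg) auto
      then show False using prod by simp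
    qed
  qed
  ultimately show ?thesis by blast
qed

lemma fb_approx:
  fixes B :: "'a::{real_inner,complete_space} \<Rightarrow> 'a set"
  assumes B: "maximal_monotone B" and s: "\<sigma> > 0"
    and Amono: "\<And>x y. inner (A x - A y) (x - y) \<ge> 0"
    and v: "v \<in> B y"
  shows "inner (A y + v) (y - fb_point A B \<sigma> x) \<ge>
     - norm ((1/\<sigma>) *\<^sub>R (x - fb_point A B \<sigma> x) - (A x - A (fb_point A B \<sigma> x))) * norm (fb_point A B \<sigma> x - y)"
proof -
  define yb where "yb = fb_point A B \<sigma> x"
  define u where "u = (1/\<sigma>) *\<^sub>R (x - yb) - A x"
  define sv where "sv = (1/\<sigma>) *\<^sub>R (x - yb) - (A x - A yb)"
  have u: "u \<in> B yb" unfolding u_def yb_def by (rule fb_props[OF B s])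
  have "inner (u - v) (yb - y) \<ge> 0" by (rule maxmono_mono[OF B u v])
  moreover have "inner (A yb - A y) (yb - y) \<ge> 0" by (rule Amono)
  ultimately have "0 \<le> inner (u - v) (yb - y) + inner (A yb - A y) (yb - y)" by simp
  also have "\<dots> = inner (sv - (A y + v)) (yb - y)"
    unfolding u_def sv_def by (simp add: inner_diff_left inner_add_left algebra_simps)
  also have "\<dots> = inner sv (yb - y) + inner (A y + v) (y - yb)"
    by (simp add: inner_diff_left inner_diff_right algebra_simps)
  finally have "- inner sv (yb - y) \<le> inner (A y + v) (y - yb)" by simp
  moreover have "inner sv (yb - y) \<le> norm sv * norm (yb - y)" by (rule norm_cauchy_schwarz)
  ultimately show ?thesis unfolding yb_def[symmetric] sv_def[symmetric] by simp
qed

lemma fb_ratio: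
  fixes B :: "'a::{real_inner,complete_space} \<Rightarrow> 'a set"
  assumes B: "maximal_monotone B" and s: "0 < \<sigma>1" "\<sigma>1 \<le> \<sigma>2"
  shows "norm (x - fb_point A B \<sigma>1 x) \<le> norm (x - fb_point A B \<sigma>2 x) \<and>
         \<sigma>1 * norm (x - fb_point A B \<sigma>2 x) \<le> \<sigma>2 * norm (x - fb_point A B \<sigma>1 x)"
proof -
  have s2: "\<sigma>2 > 0" using s by simp
  define d1 where "d1 = x - fb_point A B \<sigma>1 x"
  define d2 where "d2 = x - fb_point A B \<sigma>2 x"
  have u1: "(1/\<sigma>1) *\<^sub>R d1 - A x \<in> B (fb_point A B \<sigma>1 x)" unfolding d1_def by (rule fb_props[OF B s(1)])
  have u2: "(1/\<sigma>2) *\<^sub>R d2 - A x \<in> B (fb_point A B \<sigma>2 x)" unfolding d2_def by (rule fb_props[OF B s2])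
  have "0 \<le> inner (((1/\<sigma>1) *\<^sub>R d1 - A x) - ((1/\<sigma>2) *\<^sub>R d2 - A x)) (fb_point A B \<sigma>1 x - fb_point A B \<sigma>2 x)"
    by (rule maxmono_mono[OF B u1 u2])
  also have "fb_point A B \<sigma>1 x - fb_point A B \<sigma>2 x = d2 - d1" unfolding d1_def d2_def by simp
  also have "((1/\<sigma>1) *\<^sub>R d1 - A x) - ((1/\<sigma>2) *\<^sub>R d2 - A x) = (1/\<sigma>1) *\<^sub>R d1 - (1/\<sigma>2) *\<^sub>R d2" by simp
  finally have h: "0 \<le> inner ((1/\<sigma>1) *\<^sub>R d1 - (1/\<sigma>2) *\<^sub>R d2) (d2 - d1)" .
  have "inner ((1/\<sigma>1) *\<^sub>R d1 - (1/\<sigma>2) *\<^sub>R d2) (d2 - d1) * (\<sigma>1 * \<sigma>2) =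
        (\<sigma>1 + \<sigma>2) * inner d1 d2 - \<sigma>2 * (norm d1)\<^sup>2 - \<sigma>1 * (norm d2)\<^sup>2"
    using s s2 by (simp add: inner_diff_left inner_diff_right power2_norm_eq_inner inner_commute field_simps)
  moreover have "0 \<le> inner ((1/\<sigma>1) *\<^sub>R d1 - (1/\<sigma>2) *\<^sub>R d2) (d2 - d1) * (\<sigma>1 * \<sigma>2)"
    using h s s2 by simp
  ultimately have "\<sigma>2 * (norm d1)\<^sup>2 + \<sigma>1 * (norm d2)\<^sup>2 \<le> (\<sigma>1 + \<sigma>2) * inner d1 d2" by linarith
  also have "\<dots> \<le> (\<sigma>1 + \<sigma>2) * (norm d1 * norm d2)"
    using s s2 by (intro mult_left_mono norm_cauchy_schwarz) auto
  finally have "norm d1 \<le> norm d2 \<and> \<sigma>1 * norm d2 \<le> \<sigma>2 * norm d1"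
    using s by (intro ratio_real) auto
  then show ?thesis unfolding d1_def d2_def .
qed

lemma ls_exists:
  fixes B :: "'a::{real_inner,complete_space} \<Rightarrow> 'a set"
  assumes B: "maximal_monotone B" and s0: "\<sigma>0 > 0" and \<theta>: "0 < \<theta>" "\<theta> < 1" and \<delta>: "\<delta> > 0"
    and uc: "uniformly_continuous_on UNIV A2"
  shows "\<exists>j. \<sigma>0 * \<theta>^j * inner (A2 x - A2 (fb_point A B (\<sigma>0 * \<theta>^j) x)) (x - fb_point A B (\<sigma>0 * \<theta>^j) x)
      \<le> \<delta> * (norm (x - fb_point A B (\<sigma>0 * \<theta>^j) x))\<^sup>2"
proof (cases "norm (x - fb_point A B \<sigma>0 x) = 0")
  case True
  then have "x - fb_point A B (\<sigma>0 * \<theta>^0) x = 0" by simp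
  then show ?thesis by (intro exI[of _ 0]) simp
next
  case False
  define D0 where "D0 = norm (x - fb_point A B \<sigma>0 x)"
  have D0: "D0 > 0" using False unfolding D0_def by simp
  define c where "c = D0 / \<sigma>0"
  have c: "c > 0" unfolding c_def using D0 s0 by simp
  obtain \<eta> where \<eta>: "\<eta> > 0" "\<And>x y. norm (A2 x - A2 y) \<le> (\<delta> * c / 2) * (norm (x - y) / \<eta> + 1)"
    using uc_linear_growth[OF uc, of "\<delta> * c / 2"] \<delta> c by auto
  obtain j where j: "\<theta>^j < \<eta> / (c * \<sigma>0)" using real_arch_pow_inv[of "\<eta> / (c * \<sigma>0)" \<theta>] \<eta> c s0 \<theta> by auto
  define \<sigma> where "\<sigma> = \<sigma>0 * \<theta>^j"
  have \<sigma>: "\<sigma> > 0" unfolding \<sigma>_def using s0 \<theta> by simp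
  have \<sigma>le: "\<sigma> \<le> \<sigma>0" unfolding \<sigma>_def using s0 \<theta> by (simp add: power_le_one)
  have c\<sigma>: "c * \<sigma> \<le> \<eta>"
  proof -
    have "c * \<sigma> = (c * \<sigma>0) * \<theta>^j" unfolding \<sigma>_def by simp
    also have "\<dots> \<le> (c * \<sigma>0) * (\<eta> / (c * \<sigma>0))" using j c s0 by (intro mult_left_mono) auto
    also have "\<dots> = \<eta>" using c s0 by simp
    finally show ?thesis .
  qed
  define N where "N = norm (x - fb_point A B \<sigma> x)"
  define M where "M = norm (A2 x - A2 (fb_point A B \<sigma> x))"
  have "\<sigma> * D0 \<le> \<sigma>0 * N" using fb_ratio[OF B \<sigma> \<sigma>le, of x A] unfolding D0_def N_def by blast
  then have cN: "c * \<sigma> \<le> N" unfolding c_def using s0 by (simp add: field_simps)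
  have N0: "N \<ge> 0" unfolding N_def by simp
  have M: "M \<le> (\<delta> * c / 2) * (N / \<eta> + 1)" unfolding M_def N_def by (rule \<eta>(2))
  have "\<sigma> * inner (A2 x - A2 (fb_point A B \<sigma> x)) (x - fb_point A B \<sigma> x) \<le> \<sigma> * (M * N)"
    unfolding M_def N_def using \<sigma> by (intro mult_left_mono norm_cauchy_schwarz) auto
  also have "\<dots> \<le> \<sigma> * (((\<delta> * c / 2) * (N / \<eta> + 1)) * N)"
    using M N0 \<sigma> by (intro mult_left_mono mult_right_mono) auto
  also have "\<dots> = (\<delta> / 2) * ((c * \<sigma> / \<eta>) * N\<^sup>2) + (\<delta> / 2) * ((c * \<sigma>) * N)"
    using \<eta> by (simp add: field_simps power2_eq_square)
  also have "\<dots> \<le> (\<delta> / 2) * (1 * N\<^sup>2) + (\<delta> / 2) * (N * N)"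
  proof (intro add_mono mult_left_mono mult_right_mono)
    show "c * \<sigma> / \<eta> \<le> 1" using c\<sigma> \<eta> by simp
  qed (use \<delta> cN N0 in auto)
  also have "\<dots> = \<delta> * N\<^sup>2" by (simp add: power2_eq_square field_simps)
  finally show ?thesis unfolding \<sigma>_def N_def by (intro exI[of _ j]) (simp add: mult.assoc)
qed

lemma nonneg_of_eps:
  fixes X K :: real
  assumes "\<And>e. 0 < e \<Longrightarrow> e \<le> 1 \<Longrightarrow> X \<ge> - e * K"
  shows "X \<ge> 0"
proof (rule ccontr)
  assume "\<not> X \<ge> 0"
  then have X: "X < 0" by simp
  have K: "K > 0"
  proof (rule ccontr)
    assume "\<not> K > 0"
    then have "- 1 * K \<ge> 0" by simp
    then show False using assms[of 1] X by simp
  qed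
  define e where "e = min 1 (- X / (2 * K))"
  have "X / (2 * K) < 0" using X K by (intro divide_neg_pos) auto
  then have e: "0 < e" "e \<le> 1" unfolding e_def by auto
  have "e * K \<le> (- X / (2 * K)) * K" unfolding e_def using K by (intro mult_right_mono) auto
  also have "\<dots> = - X / 2" using K by simp
  finally have "- e * K \<ge> X / 2" by simp
  then have "X \<ge> X / 2" using assms[OF e] by linarith
  then show False using X by simp
qed

lemma closure_zer:
  fixes B :: "'a::{real_inner,complete_space} \<Rightarrow> 'a set"
  assumes B: "maximal_monotone B" and \<beta>: "\<beta> > 0" "cocoercive \<beta> A1"
    and uc: "uniformly_continuous_on UNIV A2"
    and H: "\<And>y v. v \<in> B y \<Longrightarrow> inner (A1 y + A2 y + v) (y - q) \<ge> 0"
  shows "q \<in> zer_sum (\<lambda>z. A1 z + A2 z) B"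
proof -
  define A where "A = (\<lambda>z. A1 z + A2 z)"
  define qt where "qt t = fb_point A B t q" for t
  define vt where "vt t = (1/t) *\<^sub>R (q - qt t) - A q" for t
  have vtB: "vt t \<in> B (qt t)" if "t > 0" for t unfolding vt_def qt_def by (rule fb_props[OF B that])
  have key: "norm (q - qt t) \<le> t * norm (A (qt t) - A q)" if t: "t > 0" for t
  proof -
    have "0 \<le> inner (A (qt t) + vt t) (qt t - q)" using H[OF vtB[OF t]] unfolding A_def by simp
    also have "A (qt t) + vt t = (A (qt t) - A q) + (1/t) *\<^sub>R (q - qt t)" unfolding vt_def by simp
    also have "inner \<dots> (qt t - q) = inner (A (qt t) - A q) (qt t - q) - (1/t) * (norm (q - qt t))\<^sup>2"
      by (simp add: inner_add_left power2_norm_eq_inner inner_diff_right inner_diff_left inner_commute algebra_simps)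
    finally have "(1/t) * (norm (q - qt t))\<^sup>2 \<le> inner (A (qt t) - A q) (qt t - q)" by simp
    also have "\<dots> \<le> norm (A (qt t) - A q) * norm (q - qt t)"
      using norm_cauchy_schwarz[of "A (qt t) - A q" "qt t - q"] by (simp add: norm_minus_commute)
    finally have h: "(1/t) * (norm (q - qt t))\<^sup>2 \<le> norm (A (qt t) - A q) * norm (q - qt t)" .
    show ?thesis
    proof (cases "norm (q - qt t) = 0")
      case True then show ?thesis using t by simp
    next
      case False
      then have pos: "norm (q - qt t) > 0" by simp
      from h have "(norm (q - qt t) / t) * norm (q - qt t) \<le> norm (A (qt t) - A q) * norm (q - qt t)"
        by (simp add: power2_eq_square)
      then have "norm (q - qt t) / t \<le> norm (A (qt t) - A q)" by (rule mult_right_le_imp_le[OF _ pos])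
      then show ?thesis using t by (simp add: divide_le_eq mult.commute)
    qed
  qed
  have approx: "\<exists>t>0. norm (q - qt t) \<le> e \<and> norm (vt t + A q) \<le> e" if e: "0 < e" "e \<le> 1" for e
  proof -
    obtain \<eta> where \<eta>: "\<eta> > 0" "\<And>x y. norm (A2 x - A2 y) \<le> (e/4) * (norm (x - y) / \<eta> + 1)"
      using uc_linear_growth[OF uc, of "e/4"] e by auto
    define K where "K = 1/\<beta> + (e/4) / \<eta>"
    have K: "K > 0" unfolding K_def using \<beta> \<eta> e by (simp add: add_pos_pos)
    define t where "t = min 1 (1 / (2 * K))"
    have t: "t > 0" "t \<le> 1" "t * K \<le> 1/2" unfolding t_def using K
      by (auto simp: min_def field_simps)
    define r where "r = norm (q - qt t)"
    have r0: "r \<ge> 0" unfolding r_def by simp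
    have Ab: "norm (A (qt t) - A q) \<le> r * K + e/4"
    proof -
      have "norm (A (qt t) - A q) \<le> norm (A1 (qt t) - A1 q) + norm (A2 (qt t) - A2 q)"
        unfolding A_def using norm_triangle_ineq[of "A1 (qt t) - A1 q" "A2 (qt t) - A2 q"]
        by (simp add: algebra_simps)
      moreover have "norm (A1 (qt t) - A1 q) \<le> r / \<beta>"
        using coco_lip[OF \<beta>(2) \<beta>(1), of "qt t" q] \<beta> unfolding r_def
        by (simp add: norm_minus_commute field_simps)
      moreover have "norm (A2 (qt t) - A2 q) \<le> (e/4) * (r / \<eta> + 1)"
        using \<eta>(2)[of "qt t" q] unfolding r_def by (simp add: norm_minus_commute)
      ultimately have "norm (A (qt t) - A q) \<le> r / \<beta> + (e/4) * (r / \<eta> + 1)" by linarith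
      also have "r / \<beta> + (e/4) * (r / \<eta> + 1) = r * K + e/4" unfolding K_def by (simp add: field_simps)
      finally show ?thesis .
    qed
    have tA: "t * norm (A (qt t) - A q) \<le> t * (r * K + e/4)" using t(1) by (intro mult_left_mono[OF Ab]) simp
    have rt: "r \<le> t * (r * K + e/4)" using key[OF t(1)] tA unfolding r_def by linarith
    have "t * (r * K) \<le> r / 2"
    proof -
      have "t * (r * K) = (t * K) * r" by simp
      also have "\<dots> \<le> (1/2) * r" using t(3) r0 by (intro mult_right_mono) auto
      finally show ?thesis by simp
    qed
    then have r_le: "r \<le> t * e / 2" using rt by (simp add: distrib_left)
    have "t * e \<le> 1 * e" using t e by (intro mult_right_mono) auto
    then have r_e: "r \<le> e" using r_le e by linarith
    have vt_eq: "vt t + A q = (1/t) *\<^sub>R (q - qt t)" unfolding vt_def by simp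
    have "norm (vt t + A q) = r / t" unfolding vt_eq r_def using t by simp
    also have "\<dots> \<le> norm (A (qt t) - A q)" using key[OF t(1)] t(1) unfolding r_def[symmetric]
      by (simp add: divide_le_eq mult.commute)
    also have "\<dots> \<le> r * K + e/4" by (rule Ab)
    also have "r * K \<le> (t * e / 2) * K" using r_le K by (intro mult_right_mono) auto
    also have "(t * e / 2) * K = (t * K) * (e / 2)" by simp
    also have "\<dots> \<le> (1/2) * (e/2)" using t(3) e by (intro mult_right_mono) auto
    finally have "norm (vt t + A q) \<le> e" using e by simp
    then show ?thesis using t(1) r_e unfolding r_def by blast
  qed
  have "inner (- A q - v) (q - y) \<ge> 0" if v: "v \<in> B y" for y v
  proof (rule nonneg_of_eps[where K="norm (A q) + 1 + norm v + norm (q - y)"])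
    fix e :: real assume e: "0 < e" "e \<le> 1"
    obtain t where t: "t > 0" "norm (q - qt t) \<le> e" "norm (vt t + A q) \<le> e" using approx[OF e] by blast
    have m: "inner (vt t - v) (qt t - y) \<ge> 0" by (rule maxmono_mono[OF B vtB[OF t(1)] v])
    have split: "inner (- A q - v) (q - y) = inner (vt t - v) (qt t - y) + inner (vt t - v) (q - qt t)
        + inner (- A q - vt t) (q - y)"
      by (simp add: inner_diff_left inner_diff_right inner_add_left algebra_simps)
    have b1: "inner (vt t - v) (q - qt t) \<ge> - ((norm (A q) + 1 + norm v) * e)"
    proof -
      have "norm (vt t - v) \<le> norm (vt t + A q) + norm (A q) + norm v"
        using norm_triangle_ineq4[of "vt t + A q" "A q + v"] norm_triangle_ineq[of "A q" v]
        by (simp add: algebra_simps)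
      then have nv: "norm (vt t - v) \<le> norm (A q) + 1 + norm v" using t(3) e by linarith
      have "\<bar>inner (vt t - v) (q - qt t)\<bar> \<le> norm (vt t - v) * norm (q - qt t)" by (rule Cauchy_Schwarz_ineq2)
      also have "\<dots> \<le> (norm (A q) + 1 + norm v) * e" using nv t(2) by (intro mult_mono) auto
      finally show ?thesis by linarith
    qed
    have b2: "inner (- A q - vt t) (q - y) \<ge> - (e * norm (q - y))"
    proof -
      have eq: "- A q - vt t = - (vt t + A q)" by simp
      have "\<bar>inner (- (vt t + A q)) (q - y)\<bar> \<le> norm (- (vt t + A q)) * norm (q - y)" by (rule Cauchy_Schwarz_ineq2)
      also have "\<dots> = norm (vt t + A q) * norm (q - y)" by (simp only: norm_minus_cancel)
      also have "\<dots> \<le> e * norm (q - y)" using t(3) by (intro mult_right_mono) auto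
      finally show ?thesis unfolding eq by linarith
    qed
    show "inner (- A q - v) (q - y) \<ge> - e * (norm (A q) + 1 + norm v + norm (q - y))"
      using split m b1 b2 by (simp add: algebra_simps)
  qed
  then have "- A q \<in> B q" by (intro maxmono_max[OF B]) auto
  then have "\<exists>u\<in>B q. A q + u = 0" by (intro bexI[of _ "- A q"]) simp_all
  then show ?thesis unfolding zer_sum_def A_def by simp
qed

lemma gamma_ineq:
  fixes x0 p y :: "'a::real_inner"
  assumes "inner (x0 - p) (y - p) \<le> 0"
  shows "(norm (y - p))\<^sup>2 + (norm (p - x0))\<^sup>2 \<le> (norm (y - x0))\<^sup>2"
proof -
  have e: "y - x0 = (y - p) + (p - x0)" by simp
  have "(norm (y - x0))\<^sup>2 = (norm (y - p))\<^sup>2 + 2 * inner (y - p) (p - x0) + (norm (p - x0))\<^sup>2"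
    unfolding e by (rule nsq_add)
  moreover have "inner (y - p) (p - x0) = - inner (x0 - p) (y - p)"
    by (simp add: inner_commute inner_diff_right inner_diff_left)
  ultimately show ?thesis using assms by simp
qed

lemma closed_halfsp: "closed {u. c \<le> inner w (y - u)}"
  by (intro closed_Collect_le continuous_intros)

lemma convex_halfsp: "convex {u. c \<le> inner w (y - (u::'a::real_inner))}"
proof -
  have "{u. c \<le> inner w (y - u)} = {u. inner w u \<le> inner w y - c}" by (auto simp: inner_diff_right)
  then show ?thesis by (simp add: convex_halfspace_le)
qed

lemma closed_halfsp2: "closed {u. inner w (u - y) \<le> c}"
  by (intro closed_Collect_le continuous_intros)

lemma convex_halfsp2: "convex {u. inner w (u - y) \<le> (c::real)}"
proof -
  have "{u. inner w (u - y) \<le> c} = {u. inner w u \<le> c + inner w y}" by (auto simp: inner_diff_right)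
  then show ?thesis by (simp add: convex_halfspace_le)
qed

locale alg =
  fixes A1 A2 :: "'a::{real_inner, complete_space} \<Rightarrow> 'a"
    and B :: "'a \<Rightarrow> 'a set"
    and \<beta> \<theta> \<delta> \<delta>b \<alpha>m1 :: real
    and x :: "nat \<Rightarrow> 'a"
    and \<alpha> :: "nat \<Rightarrow> real"
  assumes \<beta>_pos: "\<beta> > 0"
    and A1_coco: "cocoercive \<beta> A1"
    and A2_mm: "maximal_monotone (\<lambda>z. {A2 z})"
    and A2_uc: "uniformly_continuous_on UNIV A2"
    and B_mm: "maximal_monotone B"
    and zer_ne: "zer_sum (\<lambda>z. A1 z + A2 z) B \<noteq> {}"
    and \<theta>: "0 < \<theta>" "\<theta> < 1"
    and \<delta>: "0 < \<delta>" "\<delta> < 1"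
    and \<delta>b: "\<delta>b > 0" "1 - \<delta> - \<delta>b > 0"
    and \<alpha>m1: "\<alpha>m1 > 0" "\<alpha>m1 \<le> 4 * \<beta> * \<delta>b"
    and \<alpha>_0: "\<alpha> 0 = \<alpha>m1"
    and \<alpha>_step: "\<And>k. \<alpha> (Suc k) = \<alpha> k * \<theta> ^ ls_index (\<lambda>z. A1 z + A2 z) A2 B \<theta> \<delta> (\<alpha> k) (x k)"
    and x_step: "\<And>k. x (Suc k) = proj
        (T_set A2 \<delta>b (\<alpha> (Suc k)) (x k) (fb_point (\<lambda>z. A1 z + A2 z) B (\<alpha> (Suc k)) (x k))
          \<inter> Gamma_set (x 0) (x k)) (x 0)"
begin

abbreviation AA :: "'a \<Rightarrow> 'a" where "AA \<equiv> (\<lambda>z. A1 z + A2 z)"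
abbreviation lsi :: "nat \<Rightarrow> nat" where "lsi k \<equiv> ls_index AA A2 B \<theta> \<delta> (\<alpha> k) (x k)"
abbreviation xb :: "nat \<Rightarrow> 'a" where "xb k \<equiv> fb_point AA B (\<alpha> (Suc k)) (x k)"
abbreviation ZZ :: "'a set" where "ZZ \<equiv> zer_sum AA B"
abbreviation TT :: "nat \<Rightarrow> 'a set" where "TT k \<equiv> T_set A2 \<delta>b (\<alpha> (Suc k)) (x k) (xb k)"
abbreviation GG :: "nat \<Rightarrow> 'a set" where "GG k \<equiv> Gamma_set (x 0) (x k)"

lemma A2_mono: "inner (A2 u - A2 w) (u - w) \<ge> 0"
  using maxmono_mono[OF A2_mm, of "A2 u" u "A2 w" w] by simp

lemma AA_mono: "inner (AA u - AA w) (u - w) \<ge> 0"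
proof -
  have "inner (A1 u - A1 w) (u - w) \<ge> 0" by (rule coco_mono[OF A1_coco \<beta>_pos])
  then show ?thesis using A2_mono[of u w] by (simp add: inner_diff_left inner_add_left algebra_simps)
qed

lemma alpha_pos: "\<alpha> k > 0"
  by (induction k) (use \<alpha>_0 \<alpha>m1 \<alpha>_step \<theta> in auto)

lemma alpha_dec: "\<alpha> (Suc k) \<le> \<alpha> k"
proof -
  have "\<theta> ^ lsi k \<le> 1" using \<theta> by (simp add: power_le_one)
  then show ?thesis using \<alpha>_step[of k] alpha_pos[of k] by (simp add: mult_left_le)
qed

lemma alpha_le: "\<alpha> k \<le> \<alpha>m1"
  by (induction k) (use \<alpha>_0 alpha_dec order_trans in auto)

lemma alpha_mono: "n \<le> m \<Longrightarrow> \<alpha> m \<le> \<alpha> n"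
  using lift_Suc_antimono_le[of \<alpha>, OF alpha_dec] by blast

lemma cond: "\<alpha> (Suc k) * inner (A2 (x k) - A2 (xb k)) (x k - xb k) \<le> \<delta> * (norm (x k - xb k))\<^sup>2"
proof -
  let ?P = "\<lambda>j. \<alpha> k * \<theta>^j * inner (A2 (x k) - A2 (fb_point AA B (\<alpha> k * \<theta>^j) (x k))) (x k - fb_point AA B (\<alpha> k * \<theta>^j) (x k))
      \<le> \<delta> * (norm (x k - fb_point AA B (\<alpha> k * \<theta>^j) (x k)))\<^sup>2"
  have ex: "\<exists>j. ?P j" by (rule ls_exists[OF B_mm alpha_pos \<theta> \<delta>(1) A2_uc])
  have "?P (LEAST j. ?P j)" by (rule LeastI_ex[OF ex])
  moreover have "lsi k = (LEAST j. ?P j)" unfolding ls_index_def ..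
  ultimately show ?thesis using \<alpha>_step[of k] by simp
qed

lemma fail:
  assumes "lsi k \<noteq> 0"
  shows "\<not> (\<alpha> k * \<theta>^(lsi k - 1) * inner (A2 (x k) - A2 (fb_point AA B (\<alpha> k * \<theta>^(lsi k - 1)) (x k)))
          (x k - fb_point AA B (\<alpha> k * \<theta>^(lsi k - 1)) (x k))
      \<le> \<delta> * (norm (x k - fb_point AA B (\<alpha> k * \<theta>^(lsi k - 1)) (x k)))\<^sup>2)"
proof -
  let ?P = "\<lambda>j. \<alpha> k * \<theta>^j * inner (A2 (x k) - A2 (fb_point AA B (\<alpha> k * \<theta>^j) (x k))) (x k - fb_point AA B (\<alpha> k * \<theta>^j) (x k))
      \<le> \<delta> * (norm (x k - fb_point AA B (\<alpha> k * \<theta>^j) (x k)))\<^sup>2"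
  have "lsi k = (LEAST j. ?P j)" unfolding ls_index_def ..
  moreover have "lsi k - 1 < lsi k" using assms by simp
  ultimately show ?thesis using not_less_Least[of "lsi k - 1" ?P] by simp
qed

lemma zer_in_T:
  assumes z: "z \<in> ZZ"
  shows "z \<in> TT k"
proof -
  define a where "a = \<alpha> (Suc k)"
  have a: "a > 0" "a \<le> 4 * \<beta> * \<delta>b" unfolding a_def using alpha_pos alpha_le \<alpha>m1 order_trans by blast+
  define D where "D = x k - xb k"
  obtain w where w: "w \<in> B z" "AA z + w = 0" using z unfolding zer_sum_def by blast
  have wz: "- AA z \<in> B z" using w by (metis add.commute add_eq_0_iff)
  have u: "(1/a) *\<^sub>R D - AA (x k) \<in> B (xb k)" unfolding D_def a_def by (rule fb_props[OF B_mm alpha_pos])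
  have m1: "inner (((1/a) *\<^sub>R D - AA (x k)) - (- AA z)) (xb k - z) \<ge> 0" by (rule maxmono_mono[OF B_mm u wz])
  have m2: "inner (A2 (xb k) - A2 z) (xb k - z) \<ge> 0" by (rule A2_mono)
  define g where "g = A1 (x k) - A1 z"
  have cc: "\<beta> * (norm g)\<^sup>2 \<le> inner g (x k - z)" unfolding g_def using A1_coco unfolding cocoercive_def by blast
  have "inner ((1/a) *\<^sub>R D - (A2 (x k) - A2 (xb k))) (z - xb k)
      = - inner (((1/a) *\<^sub>R D - AA (x k)) - (- AA z)) (xb k - z) - inner (A2 (xb k) - A2 z) (xb k - z)
        + inner g (z - xb k)"
    unfolding g_def by (simp add: inner_diff_left inner_diff_right inner_add_left inner_add_right inner_minus_left algebra_simps)
  also have "\<dots> \<le> inner g (z - xb k)" using m1 m2 by simp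
  also have "inner g (z - xb k) = inner g D - inner g (x k - z)"
    unfolding D_def by (simp add: inner_diff_right algebra_simps)
  also have "\<dots> \<le> norm g * norm D - \<beta> * (norm g)\<^sup>2" using cc norm_cauchy_schwarz[of g D] by simp
  also have "\<dots> \<le> (norm D)\<^sup>2 / (4 * \<beta>)"
  proof -
    have "0 \<le> (2 * \<beta> * norm g - norm D)\<^sup>2" by simp
    then have "4 * \<beta> * (norm g * norm D - \<beta> * (norm g)\<^sup>2) \<le> (norm D)\<^sup>2"
      by (simp add: power2_eq_square algebra_simps)
    then show ?thesis using \<beta>_pos by (simp add: field_simps)
  qed
  also have "\<dots> = (1 / (4 * \<beta>)) * (norm D)\<^sup>2" by simp
  also have "\<dots> \<le> \<delta>b / a * (norm D)\<^sup>2"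
  proof (rule mult_right_mono)
    show "1 / (4 * \<beta>) \<le> \<delta>b / a" using a \<beta>_pos \<delta>b by (simp add: field_simps)
  qed simp
  finally have "inner ((1/a) *\<^sub>R D - (A2 (x k) - A2 (xb k))) (z - xb k) \<le> \<delta>b / a * (norm D)\<^sup>2"
    by (simp add: divide_inverse)
  then show ?thesis unfolding T_set_def D_def a_def by simp
qed

lemma TG_cc: "closed (TT k \<inter> GG k)" "convex (TT k \<inter> GG k)"
  unfolding T_set_def Gamma_set_def
  by (intro closed_Int closed_halfsp2 convex_Int convex_halfsp2)+

lemma gamma_all: "ZZ \<subseteq> GG k"
proof (induction k)
  case 0 then show ?case unfolding Gamma_set_def by auto
next
  case (Suc k)
  have ne: "TT k \<inter> GG k \<noteq> {}" using zer_ne zer_in_T Suc by blast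
  show ?case
  proof
    fix z assume z: "z \<in> ZZ"
    then have "z \<in> TT k \<inter> GG k" using zer_in_T Suc by blast
    then have "inner (x 0 - x (Suc k)) (z - x (Suc k)) \<le> 0"
      using proj_props(3)[OF TG_cc ne, of z "x 0"] x_step[of k] by simp
    then show "z \<in> GG (Suc k)" unfolding Gamma_set_def by simp
  qed
qed

lemma x_in: "x (Suc k) \<in> TT k" "x (Suc k) \<in> GG k"
proof -
  have ne: "TT k \<inter> GG k \<noteq> {}" using zer_ne zer_in_T gamma_all by blast
  have "x (Suc k) \<in> TT k \<inter> GG k" using proj_props(1)[OF TG_cc ne, of "x 0"] x_step[of k] by simp
  then show "x (Suc k) \<in> TT k" "x (Suc k) \<in> GG k" by auto
qed

end

lemma quad_small:
  fixes c C1 C2 D E \<tau> :: real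
  assumes "c > 0" "\<tau> > 0" "D \<ge> 0" "E \<ge> 0" "C1 \<ge> 0" "C2 \<ge> 0"
    "c * D\<^sup>2 \<le> (C1 * D + C2) * E" "2 * C1 * E \<le> c * \<tau>" "2 * C2 * E \<le> c * \<tau>\<^sup>2"
  shows "D \<le> \<tau>"
proof (rule ccontr)
  assume "\<not> D \<le> \<tau>"
  then have D: "D > \<tau>" by simp
  have "(C1 * D + C2) * E = (C1 * E) * D + C2 * E" by (simp add: algebra_simps)
  also have "(C1 * E) * D \<le> (c * \<tau> / 2) * D" using assms D by (intro mult_right_mono) auto
  also have "(c * \<tau> / 2) * D < (c * D / 2) * D" using assms D by (intro mult_strict_right_mono) auto
  also have "C2 * E \<le> c * \<tau>\<^sup>2 / 2" using assms by simp
  also have "c * \<tau>\<^sup>2 / 2 < c * D\<^sup>2 / 2" using assms D by (simp add: power_strict_mono)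
  finally have "(C1 * D + C2) * E < c * D\<^sup>2" by (simp add: power2_eq_square field_simps)
  then show False using assms(7) by simp
qed

context alg begin

lemma norm_step: "(norm (x (Suc k) - x k))\<^sup>2 + (norm (x k - x 0))\<^sup>2 \<le> (norm (x (Suc k) - x 0))\<^sup>2"
  using x_in(2)[of k] unfolding Gamma_set_def by (intro gamma_ineq) simp

lemma N_mono: "norm (x k - x 0) \<le> norm (x (Suc k) - x 0)"
proof -
  have "0 \<le> (norm (x (Suc k) - x k))\<^sup>2" by simp
  then have "(norm (x k - x 0))\<^sup>2 \<le> (norm (x (Suc k) - x 0))\<^sup>2" using norm_step[of k] by linarith
  then show ?thesis by (rule power2_le_imp_le) simp
qed

lemma z_bound: "z \<in> ZZ \<Longrightarrow> (norm (z - x k))\<^sup>2 + (norm (x k - x 0))\<^sup>2 \<le> (norm (z - x 0))\<^sup>2"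
  using gamma_all[of k] unfolding Gamma_set_def by (intro gamma_ineq) auto

definition z0 where "z0 = (SOME z. z \<in> ZZ)"
lemma z0: "z0 \<in> ZZ" unfolding z0_def using zer_ne by (simp add: some_in_eq)

definition LL where "LL = (SUP k. norm (x k - x 0))"

lemma N_bdd: "norm (x k - x 0) \<le> norm (z0 - x 0)"
proof -
  have "0 \<le> (norm (z0 - x k))\<^sup>2" by simp
  then have "(norm (x k - x 0))\<^sup>2 \<le> (norm (z0 - x 0))\<^sup>2" using z_bound[OF z0, of k] by linarith
  then show ?thesis by (rule power2_le_imp_le) simp
qed

lemma N_bdd_above: "bdd_above (range (\<lambda>k. norm (x k - x 0)))"
  unfolding bdd_above_def using N_bdd by auto

lemma N_le_L: "norm (x k - x 0) \<le> LL"
  unfolding LL_def by (rule cSUP_upper[OF UNIV_I N_bdd_above])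

lemma L_nonneg: "LL \<ge> 0" using N_le_L[of 0] by simp

lemma N_tendsto: "(\<lambda>k. norm (x k - x 0)) \<longlonglongrightarrow> LL"
  unfolding LL_def by (rule LIMSEQ_incseq_SUP[OF N_bdd_above]) (simp add: incseq_SucI N_mono)

lemma steps_small: "\<tau> > 0 \<Longrightarrow> \<exists>K. \<forall>k\<ge>K. norm (x (Suc k) - x k) \<le> \<tau>"
proof -
  assume \<tau>: "\<tau> > 0"
  have lim: "(\<lambda>k. (norm (x (Suc k) - x 0))\<^sup>2 - (norm (x k - x 0))\<^sup>2) \<longlonglongrightarrow> LL\<^sup>2 - LL\<^sup>2"
    by (intro tendsto_diff tendsto_power N_tendsto LIMSEQ_Suc[OF N_tendsto])
  have "\<tau>\<^sup>2 > 0" using \<tau> by simp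
  from LIMSEQ_D[OF lim this] obtain K where
    K: "\<forall>k\<ge>K. norm ((norm (x (Suc k) - x 0))\<^sup>2 - (norm (x k - x 0))\<^sup>2 - (LL\<^sup>2 - LL\<^sup>2)) < \<tau>\<^sup>2"
    by blast
  have "norm (x (Suc k) - x k) \<le> \<tau>" if "k \<ge> K" for k
  proof -
    have "(norm (x (Suc k) - x k))\<^sup>2 < \<tau>\<^sup>2" 
    proof -
      have "\<bar>(norm (x (Suc k) - x 0))\<^sup>2 - (norm (x k - x 0))\<^sup>2\<bar> < \<tau>\<^sup>2" using K that by simp
      then show ?thesis using norm_step[of k] by linarith
    qed
    from power2_less_imp_less[OF this] show ?thesis using \<tau> by simp
  qed
  then show ?thesis by blast
qed

lemma F7: "(1 - \<delta> - \<delta>b) * (norm (x k - xb k))\<^sup>2 \<le>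
    (norm (x k - xb k) + \<alpha> (Suc k) * norm (A2 (x k) - A2 (xb k))) * norm (x k - x (Suc k))"
proof -
  define a where "a = \<alpha> (Suc k)"
  have a: "a > 0" unfolding a_def by (rule alpha_pos)
  define D where "D = x k - xb k"
  define G where "G = A2 (x k) - A2 (xb k)"
  define e where "e = x k - x (Suc k)"
  define w where "w = (1/a) *\<^sub>R D - G"
  have T: "inner w (x (Suc k) - xb k) \<le> \<delta>b / a * (norm D)\<^sup>2"
    using x_in(1)[of k] unfolding T_set_def w_def D_def G_def a_def by simp
  have C: "a * inner G D \<le> \<delta> * (norm D)\<^sup>2" using cond[of k] unfolding a_def G_def D_def .
  have "x (Suc k) - xb k = D - e" unfolding D_def e_def by simp
  then have "inner w e = inner w D - inner w (x (Suc k) - xb k)" by (simp add: inner_diff_right)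
  moreover have "inner w D = (norm D)\<^sup>2 / a - inner G D"
    unfolding w_def by (simp add: inner_diff_left power2_norm_eq_inner)
  ultimately have "inner w e \<ge> (norm D)\<^sup>2 / a - inner G D - \<delta>b / a * (norm D)\<^sup>2" using T by simp
  then have "a * inner w e \<ge> a * ((norm D)\<^sup>2 / a - inner G D - \<delta>b / a * (norm D)\<^sup>2)"
    using a by (intro mult_left_mono) auto
  also have "a * ((norm D)\<^sup>2 / a - inner G D - \<delta>b / a * (norm D)\<^sup>2) = (norm D)\<^sup>2 - a * inner G D - \<delta>b * (norm D)\<^sup>2"
    using a by (simp add: field_simps)
  finally have h1: "(1 - \<delta> - \<delta>b) * (norm D)\<^sup>2 \<le> a * inner w e" using C by (simp add: algebra_simps)
  have "a * inner w e = inner (D - a *\<^sub>R G) e" unfolding w_def using a by (simp add: inner_diff_left field_simps)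
  also have "\<dots> \<le> norm (D - a *\<^sub>R G) * norm e" by (rule norm_cauchy_schwarz)
  also have "\<dots> \<le> (norm D + a * norm G) * norm e"
    using norm_triangle_ineq4[of D "a *\<^sub>R G"] a by (intro mult_right_mono) auto
  finally show ?thesis using h1 unfolding D_def G_def e_def a_def by simp
qed

lemma delta_small: "\<tau> > 0 \<Longrightarrow> \<exists>K. \<forall>k\<ge>K. norm (x k - xb k) \<le> \<tau>"
proof -
  assume \<tau>: "\<tau> > 0"
  obtain \<eta> where \<eta>: "\<eta> > 0" "\<And>u v. norm (A2 u - A2 v) \<le> 1 * (norm (u - v) / \<eta> + 1)"
    using uc_linear_growth[OF A2_uc, of 1] by auto
  define c where "c = 1 - \<delta> - \<delta>b"
  have c: "c > 0" unfolding c_def using \<delta>b by simp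
  define C1 where "C1 = 1 + \<alpha>m1 / \<eta>"
  define C2 where "C2 = \<alpha>m1"
  have "\<alpha>m1 / \<eta> > 0" using \<alpha>m1 \<eta> by simp
  then have C: "C1 > 0" "C2 > 0" unfolding C1_def C2_def using \<alpha>m1 by auto
  define \<tau>' where "\<tau>' = min (c * \<tau> / (2 * C1)) (c * \<tau>\<^sup>2 / (2 * C2))"
  have \<tau>': "\<tau>' > 0" unfolding \<tau>'_def using c C \<tau> by auto
  obtain K where K: "\<And>k. k \<ge> K \<Longrightarrow> norm (x (Suc k) - x k) \<le> \<tau>'" using steps_small[OF \<tau>'] by blast
  have "norm (x k - xb k) \<le> \<tau>" if k: "k \<ge> K" for k
  proof (rule quad_small[OF c \<tau> _ _ _ _ _ _ _])
    let ?D = "norm (x k - xb k)" and ?E = "norm (x k - x (Suc k))"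
    show "0 \<le> ?D" "0 \<le> ?E" "0 \<le> C1" "0 \<le> C2" using C by auto
    have E: "?E \<le> \<tau>'" using K[OF k] by (simp add: norm_minus_commute)
    have "\<alpha> (Suc k) * norm (A2 (x k) - A2 (xb k)) \<le> \<alpha>m1 * (?D / \<eta> + 1)"
      using \<eta>(2)[of "x k" "xb k"] alpha_le[of "Suc k"] alpha_pos[of "Suc k"]
      by (intro mult_mono) auto
    then have "?D + \<alpha> (Suc k) * norm (A2 (x k) - A2 (xb k)) \<le> C1 * ?D + C2"
      unfolding C1_def C2_def by (simp add: field_simps)
    then have "(?D + \<alpha> (Suc k) * norm (A2 (x k) - A2 (xb k))) * ?E \<le> (C1 * ?D + C2) * ?E"
      by (intro mult_right_mono) auto
    then show "c * ?D\<^sup>2 \<le> (C1 * ?D + C2) * ?E" using F7[of k] unfolding c_def by linarith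
    have "2 * C1 * ?E \<le> 2 * C1 * (c * \<tau> / (2 * C1))" using E C unfolding \<tau>'_def by (intro mult_left_mono) auto
    then show "2 * C1 * ?E \<le> c * \<tau>" using C by simp
    have "2 * C2 * ?E \<le> 2 * C2 * (c * \<tau>\<^sup>2 / (2 * C2))" using E C unfolding \<tau>'_def by (intro mult_left_mono) auto
    then show "2 * C2 * ?E \<le> c * \<tau>\<^sup>2" using C by simp
  qed
  then show ?thesis by blast
qed

end

lemma small_inv: "(e::real) > 0 \<Longrightarrow> \<exists>n::nat. 1 / (real n + 1) < e"
  using reals_Archimedean[of e] by (auto simp: inverse_eq_divide add.commute)

context alg begin

lemma inf_red:
  assumes ii: "\<And>ab. ab > 0 \<Longrightarrow> \<exists>k. \<alpha> k < ab"
  shows "\<exists>k\<ge>N. lsi k \<noteq> 0"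
proof (rule ccontr)
  assume "\<not> (\<exists>k\<ge>N. lsi k \<noteq> 0)"
  then have z: "\<And>k. k \<ge> N \<Longrightarrow> lsi k = 0" by blast
  have eqm: "\<alpha> (N + m) = \<alpha> N" for m
  proof (induction m)
    case 0 then show ?case by simp
  next
    case (Suc m)
    have "\<alpha> (N + Suc m) = \<alpha> (N + m) * \<theta> ^ lsi (N + m)" using \<alpha>_step[of "N + m"] by simp
    also have "lsi (N + m) = 0" using z by simp
    finally show ?case using Suc by simp
  qed
  have "\<alpha> N \<le> \<alpha> k" for k
  proof (cases "k \<le> N")
    case True then show ?thesis by (rule alpha_mono)
  next
    case False
    then obtain m where "k = N + m" by (metis le_add_diff_inverse nat_le_linear)
    then show ?thesis using eqm by simp
  qed
  moreover obtain k where "\<alpha> k < \<alpha> N" using ii[OF alpha_pos[of N]] by blast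
  ultimately show False by (simp add: not_le[symmetric])
qed

lemma approx:
  assumes e: "\<epsilon> > 0"
  shows "\<exists>k \<sigma>. \<sigma> > 0 \<and> norm (x k - fb_point AA B \<sigma> (x k)) \<le> \<epsilon> \<and> norm (x k - fb_point AA B \<sigma> (x k)) \<le> \<epsilon> * \<sigma>"
proof (cases "\<exists>ab>0. \<forall>k. ab \<le> \<alpha> k")
  case True
  then obtain ab where ab: "ab > 0" "\<And>k. ab \<le> \<alpha> k" by blast
  have "\<epsilon> * min 1 ab > 0" using e ab by simp
  from delta_small[OF this] obtain K where K: "\<And>k. k \<ge> K \<Longrightarrow> norm (x k - xb k) \<le> \<epsilon> * min 1 ab" by blast
  have "\<epsilon> * min 1 ab \<le> \<epsilon> * 1" using e by (intro mult_left_mono) auto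
  moreover have "\<epsilon> * min 1 ab \<le> \<epsilon> * \<alpha> (Suc K)" using e ab(2)[of "Suc K"] by (intro mult_left_mono) auto
  ultimately show ?thesis using K[of K] alpha_pos[of "Suc K"] by (intro exI[of _ K] exI[of _ "\<alpha> (Suc K)"]) auto
next
  case False
  then have ii: "\<And>ab. ab > 0 \<Longrightarrow> \<exists>k. \<alpha> k < ab" by (auto simp: not_le)
  have e1: "\<delta> * \<epsilon> / 2 > 0" using \<delta> e by simp
  obtain \<eta> where \<eta>: "\<eta> > 0" "\<And>u v. norm (A2 u - A2 v) \<le> (\<delta> * \<epsilon> / 2) * (norm (u - v) / \<eta> + 1)"
    using uc_linear_growth[OF A2_uc e1] by blast
  have "\<theta> * min \<epsilon> \<eta> > 0" using \<theta> e \<eta> by simp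
  from delta_small[OF this] obtain K where K: "\<And>k. k \<ge> K \<Longrightarrow> norm (x k - xb k) \<le> \<theta> * min \<epsilon> \<eta>" by blast
  obtain k where k: "k \<ge> K" "lsi k \<noteq> 0" using inf_red[OF ii] by blast
  define j where "j = lsi k - 1"
  have jS: "lsi k = Suc j" unfolding j_def using k by simp
  define \<sigma> where "\<sigma> = \<alpha> k * \<theta> ^ j"
  have \<sigma>: "\<sigma> > 0" unfolding \<sigma>_def using alpha_pos \<theta> by simp
  have aS: "\<alpha> (Suc k) = \<sigma> * \<theta>" unfolding \<sigma>_def using \<alpha>_step[of k] jS by simp
  have a_le: "\<alpha> (Suc k) \<le> \<sigma>" unfolding aS using \<sigma> \<theta> by (simp add: mult_left_le)
  define N' where "N' = norm (x k - fb_point AA B \<sigma> (x k))"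
  define M' where "M' = norm (A2 (x k) - A2 (fb_point AA B \<sigma> (x k)))"
  have N'0: "N' \<ge> 0" unfolding N'_def by simp
  have "\<alpha> (Suc k) * N' \<le> \<sigma> * norm (x k - xb k)"
    using fb_ratio[OF B_mm alpha_pos a_le, of "x k" AA] unfolding N'_def by blast
  then have "\<sigma> * (\<theta> * N') \<le> \<sigma> * norm (x k - xb k)" unfolding aS by (simp add: mult_ac)
  then have "\<theta> * N' \<le> norm (x k - xb k)" using \<sigma> by simp
  also have "\<dots> \<le> \<theta> * min \<epsilon> \<eta>" using K k by blast
  finally have N'b: "N' \<le> min \<epsilon> \<eta>" using \<theta> by simp
  have nf: "\<not> (\<sigma> * inner (A2 (x k) - A2 (fb_point AA B \<sigma> (x k))) (x k - fb_point AA B \<sigma> (x k))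
      \<le> \<delta> * N'\<^sup>2)" using fail[OF k(2)] unfolding \<sigma>_def N'_def j_def .
  have "\<sigma> * inner (A2 (x k) - A2 (fb_point AA B \<sigma> (x k))) (x k - fb_point AA B \<sigma> (x k)) \<le> \<sigma> * (M' * N')"
    unfolding M'_def N'_def using \<sigma> by (intro mult_left_mono norm_cauchy_schwarz) auto
  with nf have lt: "\<delta> * N'\<^sup>2 < \<sigma> * (M' * N')" by simp
  have N'pos: "N' > 0"
  proof (rule ccontr)
    assume "\<not> N' > 0"
    then have "N' = 0" using N'0 by simp
    then show False using lt by simp
  qed
  have "(\<delta> * N') * N' < (\<sigma> * M') * N'" using lt by (simp add: power2_eq_square mult_ac)
  then have "\<delta> * N' < \<sigma> * M'" using N'pos by (simp add: mult_less_cancel_right)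
  also have "M' \<le> (\<delta> * \<epsilon> / 2) * (N' / \<eta> + 1)" unfolding M'_def N'_def by (rule \<eta>(2))
  also have "(\<delta> * \<epsilon> / 2) * (N' / \<eta> + 1) \<le> (\<delta> * \<epsilon> / 2) * 2"
    using N'b \<eta> e1 by (intro mult_left_mono) (auto simp: divide_le_eq)
  finally have "\<delta> * N' < \<sigma> * (\<delta> * \<epsilon>)" using \<sigma> by (simp add: mult_left_mono)
  then have "N' < \<epsilon> * \<sigma>" using \<delta> by (simp add: mult_ac)
  then show ?thesis using \<sigma> N'b unfolding N'_def by (intro exI[of _ k] exI[of _ \<sigma>]) auto
qed

end

context alg begin

definition CC :: "real \<Rightarrow> 'a set" where
  "CC e = {u. norm (u - x 0) \<le> LL + e \<and>
     (\<forall>y v. v \<in> B y \<longrightarrow> inner (AA y + v) (y - u) \<ge> - e * (LL + 1 + norm (x 0 - y)))}"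

lemma CC_ne:
  assumes e: "0 < e" "e \<le> 1"
  shows "CC e \<noteq> {}"
proof -
  have e6: "e / 6 > 0" using e by simp
  obtain \<eta> where \<eta>: "\<eta> > 0" "\<And>u v. norm (A2 u - A2 v) \<le> (e / 6) * (norm (u - v) / \<eta> + 1)"
    using uc_linear_growth[OF A2_uc e6] by blast
  define e2 where "e2 = min (e / 3) (min (\<beta> * e / 3) \<eta>)"
  have e2: "e2 > 0" "e2 \<le> e / 3" "e2 \<le> \<beta> * e / 3" "e2 \<le> \<eta>" unfolding e2_def using e \<eta> \<beta>_pos by auto
  obtain k \<sigma> where k: "\<sigma> > 0" "norm (x k - fb_point AA B \<sigma> (x k)) \<le> e2"
    "norm (x k - fb_point AA B \<sigma> (x k)) \<le> e2 * \<sigma>"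
    using approx[OF e2(1)] by blast
  define yb where "yb = fb_point AA B \<sigma> (x k)"
  define D where "D = norm (x k - yb)"
  have D: "D \<le> e2" "D \<le> e2 * \<sigma>" "D \<ge> 0" using k unfolding D_def yb_def by auto
  define s where "s = (1/\<sigma>) *\<^sub>R (x k - yb) - (AA (x k) - AA yb)"
  have s: "norm s \<le> e"
  proof -
    have "norm s \<le> norm ((1/\<sigma>) *\<^sub>R (x k - yb)) + norm (A1 (x k) - A1 yb) + norm (A2 (x k) - A2 yb)"
      unfolding s_def using norm_triangle_ineq4[of "(1/\<sigma>) *\<^sub>R (x k - yb)" "AA (x k) - AA yb"]
        norm_triangle_ineq[of "A1 (x k) - A1 yb" "A2 (x k) - A2 yb"]
      by (simp add: algebra_simps)
    moreover have "norm ((1/\<sigma>) *\<^sub>R (x k - yb)) \<le> e / 3"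
    proof -
      have "norm ((1/\<sigma>) *\<^sub>R (x k - yb)) = D / \<sigma>" unfolding D_def using k(1) by simp
      also have "\<dots> \<le> e2" using D k(1) by (simp add: divide_le_eq)
      finally have "norm ((1/\<sigma>) *\<^sub>R (x k - yb)) \<le> e2" .
      then show ?thesis using e2(2) by linarith
    qed
    moreover have "norm (A1 (x k) - A1 yb) \<le> e / 3"
    proof -
      have "\<beta> * norm (A1 (x k) - A1 yb) \<le> D" unfolding D_def by (rule coco_lip[OF A1_coco \<beta>_pos])
      also have "\<dots> \<le> \<beta> * e / 3" using D e2 by simp
      finally show ?thesis using \<beta>_pos by simp
    qed
    moreover have "norm (A2 (x k) - A2 yb) \<le> e / 3"
    proof -
      have "norm (A2 (x k) - A2 yb) \<le> (e / 6) * (D / \<eta> + 1)" unfolding D_def by (rule \<eta>(2))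
      also have "\<dots> \<le> (e / 6) * 2" using D e2 \<eta> e6 by (intro mult_left_mono) (auto simp: divide_le_eq)
      finally show ?thesis by simp
    qed
    ultimately show ?thesis by linarith
  qed
  have yb_n: "norm (yb - x 0) \<le> LL + e"
  proof -
    have "norm (yb - x 0) \<le> norm (yb - x k) + norm (x k - x 0)"
      using norm_triangle_ineq[of "yb - x k" "x k - x 0"] by simp
    also have "\<dots> \<le> e + LL" using D e2 N_le_L[of k] unfolding D_def by (simp add: norm_minus_commute)
    finally show ?thesis by simp
  qed
  have "yb \<in> CC e"
    unfolding CC_def
  proof (intro CollectI conjI allI impI)
    show "norm (yb - x 0) \<le> LL + e" by (rule yb_n)
    fix y v assume v: "v \<in> B y"
    have "inner (AA y + v) (y - yb) \<ge> - norm s * norm (yb - y)"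
      using fb_approx[OF B_mm k(1) AA_mono v, of "x k"] unfolding s_def yb_def by simp
    moreover have "norm s * norm (yb - y) \<le> e * (LL + 1 + norm (x 0 - y))"
    proof (rule mult_mono)
      show "norm (yb - y) \<le> LL + 1 + norm (x 0 - y)"
        using norm_triangle_ineq[of "yb - x 0" "x 0 - y"] yb_n e by simp
    qed (use s e in auto)
    ultimately show "inner (AA y + v) (y - yb) \<ge> - e * (LL + 1 + norm (x 0 - y))" by simp
  qed
  then show ?thesis by blast
qed

lemma CC_eq: "CC e = cball (x 0) (LL + e) \<inter>
   (\<Inter>y. \<Inter>v\<in>B y. {u. - e * (LL + 1 + norm (x 0 - y)) \<le> inner (AA y + v) (y - u)})"
  unfolding CC_def by (auto simp: dist_norm norm_minus_commute)

lemma CC_cc: "closed (CC e)" "convex (CC e)"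
   apply (unfold CC_eq)
   apply (intro closed_Int closed_cball closed_INT ballI closed_halfsp)
  apply (intro convex_Int convex_cball convex_INT ballI convex_halfsp)
  done

lemma CC_mono: "e \<le> e' \<Longrightarrow> CC e \<subseteq> CC e'"
proof
  fix u assume ee: "e \<le> e'" and u: "u \<in> CC e"
  have K: "LL + 1 + norm (x 0 - y) \<ge> 0" for y using L_nonneg by simp
  show "u \<in> CC e'" using u ee unfolding CC_def
  proof (intro CollectI conjI allI impI)
    show "norm (u - x 0) \<le> LL + e'" using u ee unfolding CC_def by simp
    fix y v assume v: "v \<in> B y"
    have "- e' * (LL + 1 + norm (x 0 - y)) \<le> - e * (LL + 1 + norm (x 0 - y))"
      using ee K[of y] by (simp add: mult_right_mono)
    also have "\<dots> \<le> inner (AA y + v) (y - u)" using u v unfolding CC_def by blast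
    finally show "- e' * (LL + 1 + norm (x 0 - y)) \<le> inner (AA y + v) (y - u)" .
  qed
qed

lemma exists_q: "\<exists>q. q \<in> ZZ \<and> norm (q - x 0) \<le> LL"
proof -
  define Fam where "Fam = range (\<lambda>n::nat. CC (1 / (real n + 1)))"
  have "\<exists>q. \<forall>C\<in>Fam. q \<in> C"
  proof (rule nested_inter[where z="x 0" and R="LL + 1"])
    fix C assume "C \<in> Fam"
    then obtain n where n: "C = CC (1 / (real n + 1))" unfolding Fam_def by blast
    have en: "0 < 1 / (real n + 1)" "1 / (real n + 1) \<le> 1" by (auto simp: divide_le_eq)
    show "closed C \<and> convex C \<and> C \<noteq> {}" unfolding n using CC_cc CC_ne[OF en] by blast
    obtain u where u: "u \<in> C" using CC_ne[OF en] n by blast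
    then have "norm (u - x 0) \<le> LL + 1 / (real n + 1)" unfolding n CC_def by simp
    moreover have "LL + 1 / (real n + 1) \<le> LL + 1" using en by simp
    ultimately have "norm (u - x 0) \<le> LL + 1" by linarith
    then have "dist (x 0) u \<le> LL + 1" by (simp add: dist_norm norm_minus_commute)
    then show "\<exists>u\<in>C. dist (x 0) u \<le> LL + 1" using u by blast
  next
    fix C1 C2 assume "C1 \<in> Fam" "C2 \<in> Fam"
    then obtain n m where nm: "C1 = CC (1 / (real n + 1))" "C2 = CC (1 / (real m + 1))" unfolding Fam_def by blast
    have "CC (1 / (real (max n m) + 1)) \<subseteq> C1" unfolding nm
      by (rule CC_mono) (auto simp: frac_le)
    moreover have "CC (1 / (real (max n m) + 1)) \<subseteq> C2" unfolding nm
      by (rule CC_mono) (auto simp: frac_le)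
    moreover have "CC (1 / (real (max n m) + 1)) \<in> Fam" unfolding Fam_def by blast
    ultimately show "\<exists>C3\<in>Fam. C3 \<subseteq> C1 \<inter> C2" by blast
  next
    show "Fam \<noteq> {}" unfolding Fam_def by blast
  qed
  then obtain q where q: "\<And>n. q \<in> CC (1 / (real n + 1))" unfolding Fam_def by blast
  have qn: "norm (q - x 0) \<le> LL"
  proof (rule field_le_epsilon)
    fix e :: real assume "e > 0"
    then obtain n where n: "1 / (real n + 1) < e" using small_inv by blast
    have "norm (q - x 0) \<le> LL + 1 / (real n + 1)" using q[of n] unfolding CC_def by simp
    then show "norm (q - x 0) \<le> LL + e" using n by simp
  qed
  have "q \<in> ZZ"
  proof (rule closure_zer[OF B_mm \<beta>_pos A1_coco A2_uc])
    fix y v assume v: "v \<in> B y"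
    have K: "LL + 1 + norm (x 0 - y) \<ge> 0" using L_nonneg by simp
    have "inner (AA y + v) (y - q) \<ge> 0"
    proof (rule nonneg_of_eps[where K="LL + 1 + norm (x 0 - y)"])
      fix e :: real assume e: "0 < e" "e \<le> 1"
      obtain n where n: "1 / (real n + 1) < e" using small_inv e by blast
      have "- (1 / (real n + 1)) * (LL + 1 + norm (x 0 - y)) \<le> inner (AA y + v) (y - q)"
        using q[of n] v unfolding CC_def by blast
      moreover have "(1 / (real n + 1)) * (LL + 1 + norm (x 0 - y)) \<le> e * (LL + 1 + norm (x 0 - y))"
        using n K by (intro mult_right_mono) auto
      ultimately show "- e * (LL + 1 + norm (x 0 - y)) \<le> inner (AA y + v) (y - q)" by linarith
    qed
    then show "0 \<le> inner (A1 y + A2 y + v) (y - q)" by simp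
  qed
  then show ?thesis using qn by blast
qed

lemma strong_conv: "\<exists>q. q \<in> ZZ \<and> x \<longlonglongrightarrow> q"
proof -
  obtain q where q: "q \<in> ZZ" "norm (q - x 0) \<le> LL" using exists_q by blast
  have "x \<longlonglongrightarrow> q"
  proof (rule LIMSEQ_I)
    fix r :: real assume r: "r > 0"
    have lim: "(\<lambda>k. LL\<^sup>2 - (norm (x k - x 0))\<^sup>2) \<longlonglongrightarrow> LL\<^sup>2 - LL\<^sup>2"
      by (intro tendsto_diff tendsto_const tendsto_power N_tendsto)
    have "r\<^sup>2 > 0" using r by simp
    from LIMSEQ_D[OF lim this] obtain K where K: "\<forall>k\<ge>K. norm (LL\<^sup>2 - (norm (x k - x 0))\<^sup>2 - (LL\<^sup>2 - LL\<^sup>2)) < r\<^sup>2"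
      by blast
    have "norm (x k - q) < r" if k: "k \<ge> K" for k
    proof -
      have "(norm (q - x 0))\<^sup>2 \<le> LL\<^sup>2" using q(2) by (simp add: power_mono)
      then have "(norm (q - x k))\<^sup>2 \<le> LL\<^sup>2 - (norm (x k - x 0))\<^sup>2" using z_bound[OF q(1), of k] by linarith
      moreover have "LL\<^sup>2 - (norm (x k - x 0))\<^sup>2 < r\<^sup>2"
      proof -
        have "\<bar>LL\<^sup>2 - (norm (x k - x 0))\<^sup>2\<bar> < r\<^sup>2" using K k by simp
        then show ?thesis by (simp add: abs_less_iff)
      qed
      ultimately have "(norm (x k - q))\<^sup>2 < r\<^sup>2" by (simp add: norm_minus_commute)
      from power2_less_imp_less[OF this] show ?thesis using r by simp
    qed
    then show "\<exists>K. \<forall>k\<ge>K. norm (x k - q) < r" by blast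
  qed
  then show ?thesis using q by blast
qed

lemma main: "weak_accum_point x p \<Longrightarrow> p \<in> ZZ"
proof -
  assume "weak_accum_point x p"
  then obtain r where r: "strict_mono r" "weak_conv (x \<circ> r) p" unfolding weak_accum_point_def by blast
  obtain q where q: "q \<in> ZZ" "x \<longlonglongrightarrow> q" using strong_conv by blast
  have xr: "(x \<circ> r) \<longlonglongrightarrow> q" by (rule LIMSEQ_subseq_LIMSEQ[OF q(2) r(1)])
  have "inner p y = inner q y" for y
  proof -
    have "(\<lambda>k. inner ((x \<circ> r) k) y) \<longlonglongrightarrow> inner p y" using r(2) unfolding weak_conv_def by blast
    moreover have "(\<lambda>k. inner ((x \<circ> r) k) y) \<longlonglongrightarrow> inner q y" by (intro tendsto_inner xr tendsto_const)
    ultimately show ?thesis by (rule LIMSEQ_unique)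
  qed
  then have "inner (p - q) (p - q) = 0" by (simp add: inner_diff_left)
  then have "p = q" by simp
  then show ?thesis using q(1) by simp
qed

end

theorem lemma4p14:
  fixes A1 A2 :: "'a::{real_inner, complete_space} \<Rightarrow> 'a"
    and B :: "'a \<Rightarrow> 'a set"
    and \<beta> \<theta> \<delta> \<delta>b \<alpha>m1 :: real
    and x :: "nat \<Rightarrow> 'a"
    and \<alpha> :: "nat \<Rightarrow> real"
  assumes \<beta>_pos: "\<beta> > 0"
    and A1_coco: "cocoercive \<beta> A1"
    and A2_mm: "maximal_monotone (\<lambda>z. {A2 z})"
    and A2_uc: "uniformly_continuous_on UNIV A2"
    and B_mm: "maximal_monotone B"
    and zer_ne: "zer_sum (\<lambda>z. A1 z + A2 z) B \<noteq> {}"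
    and \<theta>: "0 < \<theta>" "\<theta> < 1"
    and \<delta>: "0 < \<delta>" "\<delta> < 1"
    and \<delta>b: "\<delta>b > 0" "1 - \<delta> - \<delta>b > 0"
    and \<alpha>m1: "\<alpha>m1 > 0" "\<alpha>m1 \<le> 4 * \<beta> * \<delta>b"
    and \<alpha>_0: "\<alpha> 0 = \<alpha>m1"
    and \<alpha>_step: "\<And>k. \<alpha> (Suc k) = \<alpha> k * \<theta> ^ ls_index (\<lambda>z. A1 z + A2 z) A2 B \<theta> \<delta> (\<alpha> k) (x k)"
    and x_step: "\<And>k. x (Suc k) = proj
        (T_set A2 \<delta>b (\<alpha> (Suc k)) (x k) (fb_point (\<lambda>z. A1 z + A2 z) B (\<alpha> (Suc k)) (x k))
          \<inter> Gamma_set (x 0) (x k)) (x 0)"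
    and no_stop: "\<And>k. x (Suc k) \<noteq> x k"
  shows "\<forall>p. weak_accum_point x p \<longrightarrow> p \<in> zer_sum (\<lambda>z. A1 z + A2 z) B"
proof -
  interpret alg A1 A2 B \<beta> \<theta> \<delta> \<delta>b \<alpha>m1 x \<alpha>
    using assms by (simp add: alg_def)
  show ?thesis using main by blast
qed

end
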